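(* Let $\Omega\subset B(\mathcal H)^d$ be an NC domain and $f:\Omega\to B(\mathcal H)^r$ an NC function. Then $f$ is continuous with respect to the norm topologies and Gâteaux differentiable, i.e. for all $x\in\Omega$ and $h\in B(\mathcal H)^d$ the limit $\lim_{t\to0,\,t\in\mathbb C}\frac{f(x+th)-f(x)}{t}$ exists in norm. Consequently $f$ is Fréchet differentiable on $\Omega$.
   Context: Throughout, $\mathcal H$ is an infinite-dimensional separable complex Hilbert space, $B(\mathcal H)$ the bounded operators with the operator norm, and $\mathcal H^{(l)}$ ($l\in\mathbb N\cup\{\infty\}$) the direct sum of $l$ copies of $\mathcal H$. $B(\mathcal H)^d$ has the norm $\|x\|=\max_i\|x^i\|$. Operations on tuples are componentwise: for bounded invertible linear $s:\mathcal H\to\mathcal H^{(l)}$ and $z\in B(\mathcal H^{(l)})^d$, $s^{-1}zs=(s^{-1}z^1s,\dots,s^{-1}z^ds)$; for a finite or countable uniformly bounded sequence $x_1,x_2,\dots$ in $B(\mathcal H)^d$ of length $l$, $\bigoplus_n x_n\in B(\mathcal H^{(l)})^d$ has $i$-th entry $\bigoplus_n x_n^i$; block matrices of tuples are defined entrywise per coordinate. A set is unitarily invariant if $u^*xu$ lies in it for each of its elements $x$ and each unitary $u\in B(\mathcal H)$. NC domain: $\Omega\subset B(\mathcal H)^d$ is an NC domain if there are subsets $\Omega_1,\Omega_2,\dots$ of $\Omega$ with (1) $\Omega_k\subset\mathrm{int}\,\Omega_{k+1}$ (norm interior) and $\Omega=\bigcup_k\Omega_k$; (2) each $\Omega_k$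 norm-bounded and unitarily invariant; (3) for every sequence $x_1,x_2,\dots$ in $\Omega_k$ of length $l\in\mathbb N\cup\{\infty\}$ there is a unitary $u:\mathcal H\to\mathcal H^{(l)}$ with $u^{-1}(\bigoplus_n x_n)u\in\Omega_k$. NC function: $f:\Omega\to B(\mathcal H)^r$ on an NC domain is NC if whenever $x,y\in\Omega$ and $s:\mathcal H\to\mathcal H^{(2)}$ is bounded, linear, invertible with $s^{-1}\begin{bmatrix}x&0\\0&y\end{bmatrix}s\in\Omega$, then $f\Big(s^{-1}\begin{bmatrix}x&0\\0&y\end{bmatrix}s\Big)=s^{-1}\begin{bmatrix}f(x)&0\\0&f(y)\end{bmatrix}s$. *)

theory Defs
  imports "HOL-Analysis.Analysis" "HOL-Library.Extended_Nat"
begin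

text \<open>Concrete model: the infinite-dimensional separable complex Hilbert space H is
  l2(nat); H^(l) is l2 of the index set {(n,k). n < l} (l a natural number or infinity).
  Vectors are functions into complex vanishing off the index set; operators are
  functions on vectors that are extensional (zero off l2).\<close>

type_synonym 'i vec = "'i \<Rightarrow> complex"
type_synonym 'i op = "'i vec \<Rightarrow> 'i vec"
type_synonym 'i tup = "nat \<Rightarrow> 'i op"

definition l2 :: "'i set \<Rightarrow> 'i vec set" where
  "l2 I = {v. (\<forall>i. i \<notin> I \<longrightarrow> v i = 0) \<and> (\<lambda>i. (cmod (v i))^2) summable_on UNIV}"

definition l2norm :: "'i vec \<Rightarrow> real" where
  "l2norm v = sqrt (infsum (\<lambda>i. (cmod (v i))^2) UNIV)"

definition bop :: "'i set \<Rightarrow> 'j set \<Rightarrow> ('i vec \<Rightarrow> 'j vec) set" where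
  "bop I J = {T. (\<forall>v\<in>l2 I. T v \<in> l2 J)
     \<and> (\<forall>v. v \<notin> l2 I \<longrightarrow> T v = (\<lambda>_. 0))
     \<and> (\<forall>u\<in>l2 I. \<forall>v\<in>l2 I. \<forall>a b. T (\<lambda>i. a * u i + b * v i) = (\<lambda>j. a * T u j + b * T v j))
     \<and> (\<exists>C. \<forall>v\<in>l2 I. l2norm (T v) \<le> C * l2norm v)}"

definition opnorm :: "'i set \<Rightarrow> ('i vec \<Rightarrow> 'j vec) \<Rightarrow> real" where
  "opnorm I T = Sup ((\<lambda>v. l2norm (T v)) ` {v \<in> l2 I. l2norm v \<le> 1})"

definition inv_pair :: "'i set \<Rightarrow> 'j set \<Rightarrow> ('i vec \<Rightarrow> 'j vec) \<Rightarrow> ('j vec \<Rightarrow> 'i vec) \<Rightarrow> bool" where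
  "inv_pair I J s t \<longleftrightarrow> s \<in> bop I J \<and> t \<in> bop J I
     \<and> (\<forall>v\<in>l2 I. t (s v) = v) \<and> (\<forall>w\<in>l2 J. s (t w) = w)"

definition unitary_pair :: "'i set \<Rightarrow> 'j set \<Rightarrow> ('i vec \<Rightarrow> 'j vec) \<Rightarrow> ('j vec \<Rightarrow> 'i vec) \<Rightarrow> bool" where
  "unitary_pair I J u t \<longleftrightarrow> inv_pair I J u t \<and> (\<forall>v\<in>l2 I. l2norm (u v) = l2norm v)"

definition BT :: "nat \<Rightarrow> 'j set \<Rightarrow> 'j tup set" where
  "BT d J = {x. (\<forall>i<d. x i \<in> bop J J) \<and> (\<forall>i\<ge>d. x i = (\<lambda>v. \<lambda>_. 0))}"

definition tnorm :: "nat \<Rightarrow> 'j set \<Rightarrow> 'j tup \<Rightarrow> real" where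
  "tnorm d J x = Max (insert 0 ((\<lambda>i. opnorm J (x i)) ` {..<d}))"

definition tadd :: "'j tup \<Rightarrow> 'j tup \<Rightarrow> 'j tup" where
  "tadd x y = (\<lambda>i v j. x i v j + y i v j)"

definition tsub :: "'j tup \<Rightarrow> 'j tup \<Rightarrow> 'j tup" where
  "tsub x y = (\<lambda>i v j. x i v j - y i v j)"

definition tscale :: "complex \<Rightarrow> 'j tup \<Rightarrow> 'j tup" where
  "tscale c x = (\<lambda>i v j. c * x i v j)"

text \<open>s^{-1} z s, where t is the inverse of s.\<close>
definition conj :: "('b vec \<Rightarrow> 'a vec) \<Rightarrow> 'b tup \<Rightarrow> ('a vec \<Rightarrow> 'b vec) \<Rightarrow> 'a tup" where
  "conj t z s = (\<lambda>i. t \<circ> z i \<circ> s)"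

definition Jset :: "enat \<Rightarrow> (nat \<times> nat) set" where
  "Jset l = {(n, k). enat n < l}"

text \<open>Direct sum of a sequence x_0, x_1, ... of length l, acting on H^(l) = l2 (Jset l).\<close>
definition dsum :: "enat \<Rightarrow> (nat \<Rightarrow> nat tup) \<Rightarrow> (nat \<times> nat) tup" where
  "dsum l x = (\<lambda>i v. if v \<in> l2 (Jset l)
      then (\<lambda>(n, k). if enat n < l then x n i (\<lambda>k'. v (n, k')) k else 0)
      else (\<lambda>_. 0))"

definition pair2 :: "nat tup \<Rightarrow> nat tup \<Rightarrow> nat \<Rightarrow> nat tup" where
  "pair2 x y = (\<lambda>n. if n = 0 then x else y)"

type_synonym H = nat

definition nc_domain :: "nat \<Rightarrow> H tup set \<Rightarrow> bool" where
  "nc_domain d \<Omega> \<longleftrightarrow> \<Omega> \<subseteq> BT d (UNIV :: H set) \<and>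
    (\<exists>\<Omega>s :: nat \<Rightarrow> H tup set.
       (\<forall>k. \<Omega>s k \<subseteq> \<Omega>) \<and> \<Omega> = (\<Union>k. \<Omega>s k)
     \<and> (\<forall>k. \<forall>x\<in>\<Omega>s k. \<exists>\<epsilon>>0. \<forall>y\<in>BT d UNIV. tnorm d UNIV (tsub y x) < \<epsilon> \<longrightarrow> y \<in> \<Omega>s (Suc k))
     \<and> (\<forall>k. \<exists>C. \<forall>x\<in>\<Omega>s k. tnorm d UNIV x \<le> C)
     \<and> (\<forall>k. \<forall>x\<in>\<Omega>s k. \<forall>u t. unitary_pair (UNIV :: H set) UNIV u t \<longrightarrow> conj t x u \<in> \<Omega>s k)
     \<and> (\<forall>k. \<forall>l::enat. 1 \<le> l \<longrightarrow> (\<forall>x. (\<forall>n. enat n < l \<longrightarrow> x n \<in> \<Omega>s k) \<longrightarrow>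
          (\<exists>u t. unitary_pair (UNIV :: H set) (Jset l) u t \<and> conj t (dsum l x) u \<in> \<Omega>s k))))"

definition nc_function :: "nat \<Rightarrow> nat \<Rightarrow> H tup set \<Rightarrow> (H tup \<Rightarrow> H tup) \<Rightarrow> bool" where
  "nc_function d r \<Omega> f \<longleftrightarrow> (\<forall>x\<in>\<Omega>. f x \<in> BT r UNIV) \<and>
    (\<forall>x\<in>\<Omega>. \<forall>y\<in>\<Omega>. \<forall>s t. inv_pair (UNIV :: H set) (Jset 2) s t
        \<and> conj t (dsum 2 (pair2 x y)) s \<in> \<Omega> \<longrightarrow>
        f (conj t (dsum 2 (pair2 x y)) s) = conj t (dsum 2 (pair2 (f x) (f y))) s)"

end

theory Submission
  imports Defs
begin

definition nsq :: "'i vec \<Rightarrow> 'i \<Rightarrow> real" where "nsq v = (\<lambda>i. (cmod (v i))^2)"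
definition SS :: "'i vec \<Rightarrow> real" where "SS v = infsum (nsq v) UNIV"

lemma nsq_nonneg[simp]: "0 \<le> nsq v i" by (simp add: nsq_def)

lemma l2norm_SS: "l2norm v = sqrt (SS v)" by (simp add: l2norm_def SS_def nsq_def)

lemma l2_iff: "v \<in> l2 I \<longleftrightarrow> (\<forall>i. i \<notin> I \<longrightarrow> v i = 0) \<and> nsq v summable_on UNIV"
  by (simp add: l2_def nsq_def)

lemma SS_nonneg: "0 \<le> SS v" unfolding SS_def by (simp add: infsum_nonneg)

lemma l2norm_nonneg: "0 \<le> l2norm v" by (simp add: l2norm_SS SS_nonneg)

lemma sum_le_SS: assumes "nsq v summable_on UNIV" "finite F" shows "sum (nsq v) F \<le> SS v"
proof -
  have "infsum (nsq v) F \<le> infsum (nsq v) UNIV"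
    by (rule infsum_mono_neutral) (use assms in auto)
  thus ?thesis using assms(2) by (simp add: SS_def)
qed

lemma SS_le_fin: assumes "\<And>F. finite F \<Longrightarrow> sum (nsq v) F \<le> B"
  shows "nsq v summable_on UNIV" "SS v \<le> B"
proof -
  show s: "nsq v summable_on UNIV"
    by (rule nonneg_bdd_above_summable_on) (auto intro!: bdd_aboveI2 assms)
  show "SS v \<le> B" unfolding SS_def by (rule infsum_le_finite_sums[OF s]) (use assms in auto)
qed

lemma l2norm_le_SS: assumes "SS w \<le> SS v" shows "l2norm w \<le> l2norm v"
  using assms by (simp add: l2norm_SS)

lemma l2norm_le_C: assumes "SS w \<le> C^2" "0 \<le> C" shows "l2norm w \<le> C"
  using assms by (simp add: l2norm_SS real_sqrt_le_iff) (metis real_sqrt_abs real_sqrt_le_mono abs_of_nonneg)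

lemma SS_l2norm: "SS v = (l2norm v)^2" by (simp add: l2norm_SS SS_nonneg)

lemma rearr:
  assumes s: "nsq v summable_on UNIV" and inj: "inj_on g A"
    and z: "\<And>j. j \<notin> A \<Longrightarrow> w j = 0" and e: "\<And>j. j \<in> A \<Longrightarrow> w j = v (g j)"
  shows "nsq w summable_on UNIV" "SS w \<le> SS v"
proof -
  have *: "sum (nsq w) F \<le> SS v" if "finite F" for F
  proof -
    have "sum (nsq w) F = sum (nsq w) (F \<inter> A)"
      by (rule sum.mono_neutral_right) (use that z in \<open>auto simp: nsq_def\<close>)
    also have "\<dots> = sum (nsq v \<circ> g) (F \<inter> A)" by (rule sum.cong) (auto simp: e nsq_def)
    also have "\<dots> = sum (nsq v) (g ` (F \<inter> A))"
      by (rule sum.reindex[symmetric]) (meson inj inf_le2 inj_on_subset)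
    also have "\<dots> \<le> SS v" by (rule sum_le_SS[OF s]) (use that in auto)
    finally show ?thesis .
  qed
  show "nsq w summable_on UNIV" "SS w \<le> SS v" using SS_le_fin[OF *] by auto
qed

lemma SS_zero[simp]: "SS (\<lambda>_. 0) = 0" by (simp add: SS_def nsq_def)
lemma l2norm_zero[simp]: "l2norm (\<lambda>_. 0) = 0" by (simp add: l2norm_SS)
lemma l2_zero[simp]: "(\<lambda>_. 0) \<in> l2 I" by (simp add: l2_def)

lemma SS_eq0: assumes "nsq v summable_on UNIV" "SS v = 0" shows "v = (\<lambda>_. 0)"
proof
  fix i have "nsq v i = 0"
    by (rule nonneg_infsum_le_0D[of "nsq v" UNIV]) (use assms in \<open>auto simp: SS_def\<close>)
  thus "v i = 0" by (simp add: nsq_def)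
qed

lemma lc_fin:
  assumes "finite F"
  shows "sqrt (sum (nsq (\<lambda>i. a * u i + b * v i)) F) \<le> cmod a * sqrt (sum (nsq u) F) + cmod b * sqrt (sum (nsq v) F)"
proof -
  have "sqrt (sum (nsq (\<lambda>i. a * u i + b * v i)) F) = L2_set (\<lambda>i. cmod (a * u i + b * v i)) F"
    by (simp add: L2_set_def nsq_def)
  also have "\<dots> \<le> L2_set (\<lambda>i. cmod a * cmod (u i) + cmod b * cmod (v i)) F"
    by (rule L2_set_mono) (auto intro: order_trans[OF norm_triangle_ineq] simp: norm_mult)
  also have "\<dots> \<le> L2_set (\<lambda>i. cmod a * cmod (u i)) F + L2_set (\<lambda>i. cmod b * cmod (v i)) F"
    by (rule L2_set_triangle_ineq)
  also have "\<dots> = cmod a * sqrt (sum (nsq u) F) + cmod b * sqrt (sum (nsq v) F)"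
    by (simp add: L2_set_def nsq_def power_mult_distrib sum_distrib_left[symmetric] real_sqrt_mult)
  finally show ?thesis .
qed

lemma lc_l2:
  assumes su: "nsq u summable_on UNIV" and sv: "nsq v summable_on UNIV"
  shows "nsq (\<lambda>i. a * u i + b * v i) summable_on UNIV"
    "l2norm (\<lambda>i. a * u i + b * v i) \<le> cmod a * l2norm u + cmod b * l2norm v"
proof -
  let ?C = "cmod a * l2norm u + cmod b * l2norm v"
  have C0: "0 \<le> ?C" by (simp add: l2norm_nonneg)
  have *: "sum (nsq (\<lambda>i. a * u i + b * v i)) F \<le> ?C^2" if "finite F" for F
  proof -
    have "sqrt (sum (nsq (\<lambda>i. a * u i + b * v i)) F) \<le> ?C"
      apply (rule order_trans[OF lc_fin[OF that]])
      apply (rule add_mono; rule mult_left_mono)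
      using sum_le_SS[OF su that] sum_le_SS[OF sv that] by (auto simp: l2norm_SS)
    moreover have nn: "0 \<le> sum (nsq (\<lambda>i. a * u i + b * v i)) F" by (rule sum_nonneg) simp
    ultimately have "(sqrt (sum (nsq (\<lambda>i. a * u i + b * v i)) F))^2 \<le> ?C^2"
      by (intro power_mono) auto
    thus ?thesis using nn by simp
  qed
  show "nsq (\<lambda>i. a * u i + b * v i) summable_on UNIV" using SS_le_fin[OF *] by auto
  show "l2norm (\<lambda>i. a * u i + b * v i) \<le> ?C" using SS_le_fin(2)[OF *] by (rule l2norm_le_C[OF _ C0])
qed

lemma l2_lc: assumes "u \<in> l2 I" "v \<in> l2 I" shows "(\<lambda>i. a * u i + b * v i) \<in> l2 I"
  using assms lc_l2(1)[of u v a b] by (auto simp: l2_iff)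

lemma SS_scale: "SS (\<lambda>i. c * v i) = (cmod c)^2 * SS v"
proof -
  have "nsq (\<lambda>i. c * v i) = (\<lambda>i. (cmod c)^2 * nsq v i)" by (auto simp: nsq_def norm_mult power_mult_distrib)
  thus ?thesis by (simp add: SS_def infsum_cmult_right')
qed

lemma l2norm_scale: "l2norm (\<lambda>i. c * v i) = cmod c * l2norm v"
  by (simp add: l2norm_SS SS_scale real_sqrt_mult)

lemma l2_scale: assumes "v \<in> l2 I" shows "(\<lambda>i. c * v i) \<in> l2 I"
  using l2_lc[OF assms assms, of c 0] by simp

lemma l2_add: assumes "u \<in> l2 I" "v \<in> l2 I" shows "(\<lambda>i. u i + v i) \<in> l2 I"
  using l2_lc[OF assms, of 1 1] by simp

lemma l2_diff: assumes "u \<in> l2 I" "v \<in> l2 I" shows "(\<lambda>i. u i - v i) \<in> l2 I"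
  using l2_lc[OF assms, of 1 "-1"] by simp

lemma l2norm_add: assumes "u \<in> l2 I" "v \<in> l2 I" shows "l2norm (\<lambda>i. u i + v i) \<le> l2norm u + l2norm v"
  using lc_l2(2)[of u v 1 1] assms by (simp add: l2_iff)

lemma l2norm_diff: assumes "u \<in> l2 I" "v \<in> l2 I" shows "l2norm (\<lambda>i. u i - v i) \<le> l2norm u + l2norm v"
  using lc_l2(2)[of u v 1 "-1"] assms by (simp add: l2_iff)

lemma bop_l2: "A \<in> bop I J \<Longrightarrow> v \<in> l2 I \<Longrightarrow> A v \<in> l2 J" by (simp add: bop_def)
lemma bop_off: "A \<in> bop I J \<Longrightarrow> v \<notin> l2 I \<Longrightarrow> A v = (\<lambda>_. 0)" by (simp add: bop_def)
lemma bop_lin: "A \<in> bop I J \<Longrightarrow> u \<in> l2 I \<Longrightarrow> v \<in> l2 I \<Longrightarrow> A (\<lambda>i. a * u i + b * v i) = (\<lambda>j. a * A u j + b * A v j)"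
  by (simp add: bop_def)
lemma bop_zero: "A \<in> bop I J \<Longrightarrow> A (\<lambda>_. 0) = (\<lambda>_. 0)"
  using bop_lin[of A I J "\<lambda>_. 0" "\<lambda>_. 0" 0 0] by simp
lemma bop_scale: "A \<in> bop I J \<Longrightarrow> v \<in> l2 I \<Longrightarrow> A (\<lambda>i. c * v i) = (\<lambda>j. c * A v j)"
  using bop_lin[of A I J v v c 0] by simp
lemma bop_add: "A \<in> bop I J \<Longrightarrow> u \<in> l2 I \<Longrightarrow> v \<in> l2 I \<Longrightarrow> A (\<lambda>i. u i + v i) = (\<lambda>j. A u j + A v j)"
  using bop_lin[of A I J u v 1 1] by simp
lemma bop_diff: "A \<in> bop I J \<Longrightarrow> u \<in> l2 I \<Longrightarrow> v \<in> l2 I \<Longrightarrow> A (\<lambda>i. u i - v i) = (\<lambda>j. A u j - A v j)"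
  using bop_lin[of A I J u v 1 "-1"] by simp
lemma bop_bnd: "A \<in> bop I J \<Longrightarrow> \<exists>C. \<forall>v\<in>l2 I. l2norm (A v) \<le> C * l2norm v" by (simp add: bop_def)

lemma l2_summ: "v \<in> l2 I \<Longrightarrow> nsq v summable_on UNIV" by (simp add: l2_iff)

lemma bnd_abs: "(x::real) \<le> C * y \<Longrightarrow> 0 \<le> y \<Longrightarrow> x \<le> \<bar>C\<bar> * y"
  by (meson abs_ge_self mult_right_mono order_trans)

lemma bnd_le1: "(x::real) \<le> C * y \<Longrightarrow> 0 \<le> y \<Longrightarrow> y \<le> 1 \<Longrightarrow> x \<le> \<bar>C\<bar>"
  by (meson bnd_abs abs_ge_zero mult_left_le order_trans)

lemma l2norm_eq0: assumes "v \<in> l2 I" "l2norm v = 0" shows "v = (\<lambda>_. 0)"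
  using SS_eq0[OF l2_summ[OF assms(1)]] assms(2) by (simp add: l2norm_SS)

lemma opnorm_le:
  assumes "0 \<le> C" "\<And>v. v \<in> l2 I \<Longrightarrow> l2norm (A v) \<le> C * l2norm v"
  shows "opnorm I A \<le> C"
  unfolding opnorm_def
proof (rule cSup_least)
  show "(\<lambda>v. l2norm (A v)) ` {v \<in> l2 I. l2norm v \<le> 1} \<noteq> {}"
  proof -
    have "(\<lambda>_. 0) \<in> {v \<in> l2 I. l2norm v \<le> 1}" by simp
    thus ?thesis by blast
  qed
next
  fix x assume "x \<in> (\<lambda>v. l2norm (A v)) ` {v \<in> l2 I. l2norm v \<le> 1}"
  then obtain v where v: "v \<in> l2 I" "l2norm v \<le> 1" "x = l2norm (A v)" by auto
  have "x \<le> C * l2norm v" using assms(2)[OF v(1)] v(3) by simp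
  also have "\<dots> \<le> C" using v(2) assms(1) by (simp add: mult_left_le)
  finally show "x \<le> C" .
qed

lemma opnorm_bound:
  assumes A: "A \<in> bop I J" and v: "v \<in> l2 I"
  shows "l2norm (A v) \<le> opnorm I A * l2norm v"
proof (cases "l2norm v = 0")
  case True
  then have "v = (\<lambda>_. 0)" by (rule l2norm_eq0[OF v])
  then show ?thesis using bop_zero[OF A] True by simp
next
  case False
  then have pos: "0 < l2norm v" using l2norm_nonneg[of v] by linarith
  obtain C where C: "\<forall>v\<in>l2 I. l2norm (A v) \<le> C * l2norm v" using bop_bnd[OF A] by blast
  let ?c = "complex_of_real (1 / l2norm v)"
  let ?w = "\<lambda>i. ?c * v i"
  have w: "?w \<in> l2 I" by (rule l2_scale[OF v])
  have "l2norm ?w = cmod ?c * l2norm v" by (rule l2norm_scale)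
  hence nw: "l2norm ?w = 1" using pos by (simp add: norm_divide)
  have bdd: "bdd_above ((\<lambda>v. l2norm (A v)) ` {v \<in> l2 I. l2norm v \<le> 1})"
  proof (rule bdd_aboveI2)
    fix u assume "u \<in> {v \<in> l2 I. l2norm v \<le> 1}"
    then have "l2norm (A u) \<le> C * l2norm u" "l2norm u \<le> 1" "0 \<le> l2norm u" using C l2norm_nonneg by auto
    then show "l2norm (A u) \<le> \<bar>C\<bar>"
      using bnd_le1 by blast
  qed
  have "l2norm (A ?w) \<le> opnorm I A" unfolding opnorm_def
    by (rule cSup_upper[OF _ bdd]) (use w nw in auto)
  moreover have "A ?w = (\<lambda>j. ?c * A v j)" by (rule bop_scale[OF A v])
  moreover have "l2norm (\<lambda>j. ?c * A v j) = cmod ?c * l2norm (A v)" by (rule l2norm_scale)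
  ultimately have "l2norm (A v) / l2norm v \<le> opnorm I A" using pos by (simp add: norm_divide)
  thus ?thesis using pos by (simp add: divide_le_eq mult.commute)
qed

lemma opnorm_nonneg: assumes "A \<in> bop I J" shows "0 \<le> opnorm I A"
proof -
  obtain C where C: "\<forall>v\<in>l2 I. l2norm (A v) \<le> C * l2norm v" using bop_bnd[OF assms] by blast
  have bdd: "bdd_above ((\<lambda>v. l2norm (A v)) ` {v \<in> l2 I. l2norm v \<le> 1})"
  proof (rule bdd_aboveI2)
    fix u assume "u \<in> {v \<in> l2 I. l2norm v \<le> 1}"
    then have "l2norm (A u) \<le> C * l2norm u" "l2norm u \<le> 1" "0 \<le> l2norm u" using C l2norm_nonneg by auto
    then show "l2norm (A u) \<le> \<bar>C\<bar>"
      using bnd_le1 by blast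
  qed
  have "l2norm (A (\<lambda>_. 0)) \<le> opnorm I A" unfolding opnorm_def
    by (rule cSup_upper[OF _ bdd]) auto
  thus ?thesis using l2norm_nonneg[of "A (\<lambda>_. 0)"] by linarith
qed

lemma bop_comp: assumes A: "A \<in> bop I J" and B: "B \<in> bop J K" shows "B \<circ> A \<in> bop I K"
proof -
  obtain C where C: "\<forall>v\<in>l2 I. l2norm (A v) \<le> C * l2norm v" using bop_bnd[OF A] by blast
  obtain D where D: "\<forall>v\<in>l2 J. l2norm (B v) \<le> D * l2norm v" using bop_bnd[OF B] by blast
  have "l2norm (B (A v)) \<le> (\<bar>D\<bar> * \<bar>C\<bar>) * l2norm v" if v: "v \<in> l2 I" for v
  proof -
    have "l2norm (B (A v)) \<le> D * l2norm (A v)" using D bop_l2[OF A v] by blast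
    also have "\<dots> \<le> \<bar>D\<bar> * l2norm (A v)" by (simp add: l2norm_nonneg mult_right_mono)
    also have "\<dots> \<le> \<bar>D\<bar> * (\<bar>C\<bar> * l2norm v)"
      by (rule mult_left_mono) (use C v l2norm_nonneg[of v] in \<open>auto intro: bnd_abs\<close>)
    finally show ?thesis by simp
  qed
  moreover have "(B \<circ> A) v \<in> l2 K" if "v \<in> l2 I" for v
    using bop_l2[OF B bop_l2[OF A that]] by simp
  moreover have "(B \<circ> A) v = (\<lambda>_. 0)" if "v \<notin> l2 I" for v
    using bop_off[OF A that] bop_zero[OF B] by simp
  moreover have "(B \<circ> A) (\<lambda>i. a * u i + b * v i) = (\<lambda>j. a * (B \<circ> A) u j + b * (B \<circ> A) v j)"
    if "u \<in> l2 I" "v \<in> l2 I" for u v a b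
    using bop_lin[OF A that] bop_lin[OF B bop_l2[OF A that(1)] bop_l2[OF A that(2)]] by simp
  moreover have "\<exists>C. \<forall>v\<in>l2 I. l2norm ((B \<circ> A) v) \<le> C * l2norm v"
    using calculation(1) by auto
  ultimately show ?thesis unfolding bop_def mem_Collect_eq by blast
qed

lemma bop_lc:
  assumes A: "A \<in> bop I J" and B: "B \<in> bop I J"
  shows "(\<lambda>v j. a * A v j + b * B v j) \<in> bop I J"
proof -
  obtain C where C: "\<forall>v\<in>l2 I. l2norm (A v) \<le> C * l2norm v" using bop_bnd[OF A] by blast
  obtain D where D: "\<forall>v\<in>l2 I. l2norm (B v) \<le> D * l2norm v" using bop_bnd[OF B] by blast
  have "l2norm (\<lambda>j. a * A v j + b * B v j) \<le> (cmod a * \<bar>C\<bar> + cmod b * \<bar>D\<bar>) * l2norm v" if v: "v \<in> l2 I" for v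
  proof -
    have "l2norm (\<lambda>j. a * A v j + b * B v j) \<le> cmod a * l2norm (A v) + cmod b * l2norm (B v)"
      by (rule lc_l2(2)) (use bop_l2[OF A v] bop_l2[OF B v] in \<open>auto simp: l2_iff\<close>)
    also have "\<dots> \<le> cmod a * (\<bar>C\<bar> * l2norm v) + cmod b * (\<bar>D\<bar> * l2norm v)"
      apply (intro add_mono mult_left_mono)
      using C D v l2norm_nonneg[of v]
      by (auto intro: bnd_abs)
    finally show ?thesis by (simp add: algebra_simps)
  qed
  moreover have "(\<lambda>j. a * A v j + b * B v j) \<in> l2 J" if "v \<in> l2 I" for v
    using l2_lc[OF bop_l2[OF A that] bop_l2[OF B that]] .
  moreover have "(\<lambda>j. a * A (\<lambda>i. c * u i + d * v i) j + b * B (\<lambda>i. c * u i + d * v i) j) =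
     (\<lambda>j. c * (a * A u j + b * B u j) + d * (a * A v j + b * B v j))" if "u \<in> l2 I" "v \<in> l2 I" for u v c d
    by (simp add: bop_lin[OF A that] bop_lin[OF B that] algebra_simps)
  ultimately show ?thesis using bop_off[OF A] bop_off[OF B] unfolding bop_def by auto
qed

lemma tnorm_ge: assumes "i < m" shows "opnorm J (z i) \<le> tnorm m J z"
  unfolding tnorm_def by (rule Max_ge) (use assms in auto)

lemma tnorm_nonneg: "0 \<le> tnorm m J z"
  unfolding tnorm_def by (rule Max_ge) auto

lemma tnorm_le: assumes "0 \<le> C" "\<And>i. i < m \<Longrightarrow> opnorm J (z i) \<le> C" shows "tnorm m J z \<le> C"
  unfolding tnorm_def using assms by (auto intro!: Max.boundedI)

lemma BT_bop: "z \<in> BT m J \<Longrightarrow> i < m \<Longrightarrow> z i \<in> bop J J" by (simp add: BT_def)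
lemma BT_hi: "z \<in> BT m J \<Longrightarrow> m \<le> i \<Longrightarrow> z i = (\<lambda>v. \<lambda>_. 0)" by (simp add: BT_def)

lemma tnorm_bound: assumes "z \<in> BT m J" "i < m" "v \<in> l2 J"
  shows "l2norm (z i v) \<le> tnorm m J z * l2norm v"
  using opnorm_bound[OF BT_bop[OF assms(1,2)] assms(3)] tnorm_ge[OF assms(2), of J z]
  by (meson l2norm_nonneg mult_right_mono order_trans)

lemma tnorm_le2: assumes "0 \<le> C" "\<And>i v. i < m \<Longrightarrow> v \<in> l2 J \<Longrightarrow> l2norm (z i v) \<le> C * l2norm v"
  shows "tnorm m J z \<le> C"
  by (rule tnorm_le[OF assms(1)]) (rule opnorm_le[OF assms(1)], use assms(2) in auto)

lemma BT_l2: assumes "z \<in> BT m J" "v \<in> l2 J" shows "z i v \<in> l2 J"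
  by (cases "i < m") (use assms in \<open>auto simp: bop_l2 BT_def\<close>)

lemma BT_lc: assumes "x \<in> BT m J" "y \<in> BT m J" shows "(\<lambda>i v j. a * x i v j + b * y i v j) \<in> BT m J"
  using assms bop_lc[of "x i" J J "y i" a b for i] unfolding BT_def by auto

lemma tsub_BT: "x \<in> BT m J \<Longrightarrow> y \<in> BT m J \<Longrightarrow> tsub x y \<in> BT m J"
  using BT_lc[of x m J y 1 "-1"] by (simp add: tsub_def)
lemma tadd_BT: "x \<in> BT m J \<Longrightarrow> y \<in> BT m J \<Longrightarrow> tadd x y \<in> BT m J"
  using BT_lc[of x m J y 1 1] by (simp add: tadd_def)
lemma tscale_BT: "x \<in> BT m J \<Longrightarrow> tscale c x \<in> BT m J"
  using BT_lc[of x m J x c 0] by (simp add: tscale_def)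

lemma tnorm_lc: assumes "x \<in> BT m J" "y \<in> BT m J"
  shows "tnorm m J (\<lambda>i v j. a * x i v j + b * y i v j) \<le> cmod a * tnorm m J x + cmod b * tnorm m J y"
proof (rule tnorm_le2)
  show "0 \<le> cmod a * tnorm m J x + cmod b * tnorm m J y" by (simp add: tnorm_nonneg)
  fix i v assume i: "i < m" and v: "v \<in> l2 J"
  have "l2norm (\<lambda>j. a * x i v j + b * y i v j) \<le> cmod a * l2norm (x i v) + cmod b * l2norm (y i v)"
    by (rule lc_l2(2)) (use BT_l2[OF assms(1) v] BT_l2[OF assms(2) v] in \<open>auto simp: l2_iff\<close>)
  also have "\<dots> \<le> cmod a * (tnorm m J x * l2norm v) + cmod b * (tnorm m J y * l2norm v)"
    by (intro add_mono mult_left_mono tnorm_bound assms i v) auto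
  finally show "l2norm (\<lambda>j. a * x i v j + b * y i v j) \<le> (cmod a * tnorm m J x + cmod b * tnorm m J y) * l2norm v"
    by (simp add: algebra_simps)
qed

lemma tnorm_sub: "x \<in> BT m J \<Longrightarrow> y \<in> BT m J \<Longrightarrow> tnorm m J (tsub x y) \<le> tnorm m J x + tnorm m J y"
  using tnorm_lc[of x m J y 1 "-1"] by (simp add: tsub_def)
lemma tnorm_add: "x \<in> BT m J \<Longrightarrow> y \<in> BT m J \<Longrightarrow> tnorm m J (tadd x y) \<le> tnorm m J x + tnorm m J y"
  using tnorm_lc[of x m J y 1 1] by (simp add: tadd_def)
lemma tnorm_scale_le: "x \<in> BT m J \<Longrightarrow> tnorm m J (tscale c x) \<le> cmod c * tnorm m J x"
  using tnorm_lc[of x m J x c 0] by (simp add: tscale_def)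

lemma tnorm_scale: assumes "x \<in> BT m J" shows "tnorm m J (tscale c x) = cmod c * tnorm m J x"
proof (cases "c = 0")
  case True
  have "tnorm m J (tscale c x) \<le> 0" using tnorm_scale_le[OF assms, of c] True by simp
  then show ?thesis using True tnorm_nonneg[of m J] by (simp add: order_antisym)
next
  case False
  have "tscale (1/c) (tscale c x) = x" using False by (auto simp: tscale_def)
  then have "tnorm m J x \<le> cmod (1/c) * tnorm m J (tscale c x)"
    using tnorm_scale_le[OF tscale_BT[OF assms], of "1/c" c] by simp
  then have "cmod c * tnorm m J x \<le> tnorm m J (tscale c x)" using False
    by (simp add: norm_divide field_simps)
  then show ?thesis using tnorm_scale_le[OF assms, of c] by simp
qed

lemma tsub_tsub_tri: assumes "x \<in> BT m J" "y \<in> BT m J" "z \<in> BT m J"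
  shows "tnorm m J (tsub x z) \<le> tnorm m J (tsub x y) + tnorm m J (tsub y z)"
proof -
  have "tsub x z = tadd (tsub x y) (tsub y z)" by (auto simp: tsub_def tadd_def)
  then show ?thesis using tnorm_add[OF tsub_BT[OF assms(1,2)] tsub_BT[OF assms(2,3)]] by simp
qed

lemma tsub_sym: assumes "x \<in> BT m J" "y \<in> BT m J" shows "tnorm m J (tsub x y) = tnorm m J (tsub y x)"
proof -
  have "tsub x y = tscale (-1) (tsub y x)" by (auto simp: tsub_def tscale_def)
  then show ?thesis using tnorm_scale[OF tsub_BT[OF assms(2,1)], of "-1"] by simp
qed

lemma Jset2: "Jset 2 = {(n,k). n < 2}" unfolding Jset_def by (auto simp: numeral_eq_enat)
lemma Jset_inf: "Jset \<infinity> = UNIV" unfolding Jset_def by auto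

abbreviation "J2 \<equiv> Jset 2"

definition Pn :: "nat \<Rightarrow> (nat \<times> nat) vec \<Rightarrow> nat vec" where "Pn n w = (\<lambda>k. w (n, k))"
definition blk :: "nat vec \<Rightarrow> nat vec \<Rightarrow> (nat \<times> nat) vec" where
  "blk a b = (\<lambda>(n, k). if n = 0 then a k else if n = 1 then b k else 0)"

lemma Pn_blk[simp]: "Pn 0 (blk a b) = a" "Pn (Suc 0) (blk a b) = b" by (auto simp: Pn_def blk_def)
lemma blk_zero[simp]: "blk (\<lambda>_. 0) (\<lambda>_. 0) = (\<lambda>_. 0)" by (auto simp: blk_def)
lemma blk_app: "blk a b (n, k) = (if n = 0 then a k else if n = 1 then b k else 0)" by (simp add: blk_def)

lemma Pn_l2: assumes "w \<in> l2 J" shows "Pn n w \<in> l2 UNIV" "l2norm (Pn n w) \<le> l2norm w"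
proof -
  have r: "nsq (Pn n w) summable_on UNIV \<and> SS (Pn n w) \<le> SS w"
    using rearr[OF l2_summ[OF assms], of "\<lambda>k. (n,k)" UNIV "Pn n w"] by (auto simp: inj_on_def Pn_def)
  then show "Pn n w \<in> l2 UNIV" by (simp add: l2_iff)
  show "l2norm (Pn n w) \<le> l2norm w" using r by (simp add: l2norm_le_SS)
qed

lemma Pn_lin: "Pn n (\<lambda>j. a * u j + b * v j) = (\<lambda>k. a * Pn n u k + b * Pn n v k)" by (simp add: Pn_def)

lemma blk0_l2: assumes "a \<in> l2 UNIV" shows "blk a (\<lambda>_. 0) \<in> l2 J2" "l2norm (blk a (\<lambda>_. 0)) \<le> l2norm a"
proof -
  have r: "nsq (blk a (\<lambda>_. 0)) summable_on UNIV \<and> SS (blk a (\<lambda>_. 0)) \<le> SS a"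
    using rearr[OF l2_summ[OF assms], of snd "{0}\<times>UNIV" "blk a (\<lambda>_. 0)"] by (auto simp: inj_on_def blk_def)
  then show "blk a (\<lambda>_. 0) \<in> l2 J2" by (auto simp: l2_iff Jset2 blk_def)
  show "l2norm (blk a (\<lambda>_. 0)) \<le> l2norm a" using r by (simp add: l2norm_le_SS)
qed

lemma blk1_l2: assumes "b \<in> l2 UNIV" shows "blk (\<lambda>_. 0) b \<in> l2 J2" "l2norm (blk (\<lambda>_. 0) b) \<le> l2norm b"
proof -
  have r: "nsq (blk (\<lambda>_. 0) b) summable_on UNIV \<and> SS (blk (\<lambda>_. 0) b) \<le> SS b"
    using rearr[OF l2_summ[OF assms], of snd "{1}\<times>UNIV" "blk (\<lambda>_. 0) b"] by (auto simp: inj_on_def blk_def)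
  then show "blk (\<lambda>_. 0) b \<in> l2 J2" by (auto simp: l2_iff Jset2 blk_def)
  show "l2norm (blk (\<lambda>_. 0) b) \<le> l2norm b" using r by (simp add: l2norm_le_SS)
qed

lemma blk_split: "blk a b = (\<lambda>j. blk a (\<lambda>_. 0) j + blk (\<lambda>_. 0) b j)" by (auto simp: blk_def)

lemma blk_l2: assumes "a \<in> l2 UNIV" "b \<in> l2 UNIV" shows "blk a b \<in> l2 J2" "l2norm (blk a b) \<le> l2norm a + l2norm b"
proof -
  show "blk a b \<in> l2 J2" by (subst blk_split) (rule l2_add[OF blk0_l2(1)[OF assms(1)] blk1_l2(1)[OF assms(2)]])
  have "l2norm (blk a b) \<le> l2norm (blk a (\<lambda>_. 0)) + l2norm (blk (\<lambda>_. 0) b)"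
    by (subst blk_split) (rule l2norm_add[OF blk0_l2(1)[OF assms(1)] blk1_l2(1)[OF assms(2)]])
  then show "l2norm (blk a b) \<le> l2norm a + l2norm b" using blk0_l2(2)[OF assms(1)] blk1_l2(2)[OF assms(2)] by simp
qed

lemma blk_lin: "blk (\<lambda>k. a * u k + b * v k) (\<lambda>k. a * u' k + b * v' k) = (\<lambda>j. a * blk u u' j + b * blk v v' j)"
  by (auto simp: blk_def)

lemma l2_J2_eq: assumes "w \<in> l2 J2" shows "w = blk (Pn 0 w) (Pn 1 w)"
proof
  fix j :: "nat \<times> nat" obtain n k where j: "j = (n,k)" by (cases j)
  show "w j = blk (Pn 0 w) (Pn 1 w) j"
    using assms unfolding j by (auto simp: blk_def Pn_def l2_def Jset2)
qed

lemma l2norm_blk_ge: assumes "a \<in> l2 UNIV" "b \<in> l2 UNIV"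
  shows "l2norm a \<le> l2norm (blk a b)" "l2norm b \<le> l2norm (blk a b)"
  using Pn_l2(2)[OF blk_l2(1)[OF assms], of 0] Pn_l2(2)[OF blk_l2(1)[OF assms], of 1] by auto

lemma bop_intro:
  assumes A: "\<And>v. A v = (if v \<in> l2 I then F v else (\<lambda>_. 0))"
    and l2: "\<And>v. v \<in> l2 I \<Longrightarrow> F v \<in> l2 J"
    and bd: "\<And>v. v \<in> l2 I \<Longrightarrow> l2norm (F v) \<le> C * l2norm v"
    and lin: "\<And>u v a b. u \<in> l2 I \<Longrightarrow> v \<in> l2 I \<Longrightarrow> F (\<lambda>i. a * u i + b * v i) = (\<lambda>j. a * F u j + b * F v j)"
  shows "A \<in> bop I J"
proof -
  have "A (\<lambda>i. a * u i + b * v i) = (\<lambda>j. a * A u j + b * A v j)" if "u \<in> l2 I" "v \<in> l2 I" for u v a b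
    using that A[of u] A[of v] A[of "\<lambda>i. a * u i + b * v i"] l2_lc[OF that, of a b] lin[OF that] by simp
  moreover have "\<exists>C. \<forall>v\<in>l2 I. l2norm (A v) \<le> C * l2norm v" using A bd by auto
  ultimately show ?thesis unfolding bop_def mem_Collect_eq using A l2 by auto
qed

definition u0 :: "nat vec \<Rightarrow> (nat \<times> nat) vec" where
  "u0 v = (if v \<in> l2 UNIV then blk (\<lambda>k. v (2*k)) (\<lambda>k. v (Suc (2*k))) else (\<lambda>_. 0))"
definition t0 :: "(nat \<times> nat) vec \<Rightarrow> nat vec" where
  "t0 w = (if w \<in> l2 J2 then (\<lambda>m. w (m mod 2, m div 2)) else (\<lambda>_. 0))"

lemma u0_raw: assumes "v \<in> l2 UNIV"
  shows "blk (\<lambda>k. v (2*k)) (\<lambda>k. v (Suc (2*k))) \<in> l2 J2" "SS (blk (\<lambda>k. v (2*k)) (\<lambda>k. v (Suc (2*k)))) \<le> SS v"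
proof -
  have inj: "inj_on (\<lambda>(n,k). 2*k+n) {(n::nat,k::nat). n < 2}" by (auto simp: inj_on_def; presburger)
  have r: "nsq (blk (\<lambda>k. v (2*k)) (\<lambda>k. v (Suc (2*k)))) summable_on UNIV \<and> SS (blk (\<lambda>k. v (2*k)) (\<lambda>k. v (Suc (2*k)))) \<le> SS v"
  proof -
    have z: "blk (\<lambda>k. v (2*k)) (\<lambda>k. v (Suc (2*k))) j = 0" if "j \<notin> {(n, k). n < 2}" for j
      using that by (cases j) (auto simp: blk_def)
    have e: "blk (\<lambda>k. v (2*k)) (\<lambda>k. v (Suc (2*k))) j = v ((\<lambda>(n,k). 2*k+n) j)" if "j \<in> {(n, k). n < 2}" for j
    proof -
      obtain n k where j: "j = (n,k)" by (cases j)
      show ?thesis using that unfolding j by (cases n) (auto simp: blk_def)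
    qed
    show ?thesis using rearr[OF l2_summ[OF assms] inj z e] by blast
  qed
  then show "blk (\<lambda>k. v (2*k)) (\<lambda>k. v (Suc (2*k))) \<in> l2 J2" by (auto simp: l2_iff Jset2 blk_def)
  show "SS (blk (\<lambda>k. v (2*k)) (\<lambda>k. v (Suc (2*k)))) \<le> SS v" using r by simp
qed

lemma t0_raw: assumes "w \<in> l2 J2"
  shows "(\<lambda>m. w (m mod 2, m div 2)) \<in> l2 UNIV" "SS (\<lambda>m. w (m mod 2, m div 2)) \<le> SS w"
proof -
  have inj: "inj_on (\<lambda>m::nat. (m mod 2, m div 2)) UNIV"
    by (auto simp: inj_on_def) (metis div_mult_mod_eq)
  have r: "nsq (\<lambda>m. w (m mod 2, m div 2)) summable_on UNIV \<and> SS (\<lambda>m. w (m mod 2, m div 2)) \<le> SS w"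
    using rearr[OF l2_summ[OF assms] inj] by auto
  then show "(\<lambda>m. w (m mod 2, m div 2)) \<in> l2 UNIV" by (simp add: l2_iff)
  show "SS (\<lambda>m. w (m mod 2, m div 2)) \<le> SS w" using r by simp
qed

lemma t0u0[simp]: assumes "v \<in> l2 UNIV" shows "t0 (u0 v) = v"
proof
  fix m :: nat
  have e: "t0 (u0 v) m = blk (\<lambda>k. v (2*k)) (\<lambda>k. v (Suc (2*k))) (m mod 2, m div 2)"
    using assms by (simp add: u0_def t0_def u0_raw)
  show "t0 (u0 v) m = v m"
  proof (cases "even m")
    case True then show ?thesis unfolding e by (simp add: blk_def)
  next
    case False then have "m mod 2 = 1" "Suc (2 * (m div 2)) = m" by presburger+
    then show ?thesis unfolding e by (simp add: blk_def)
  qed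
qed

lemma u0t0[simp]: assumes "w \<in> l2 J2" shows "u0 (t0 w) = w"
proof -
  have "u0 (t0 w) = blk (Pn 0 w) (Pn 1 w)" using assms by (auto simp: u0_def t0_def t0_raw Pn_def)
  then show ?thesis using l2_J2_eq[OF assms] by simp
qed

lemma u0_l2: "u0 v \<in> l2 J2" by (simp add: u0_def u0_raw)
lemma t0_l2: "t0 w \<in> l2 UNIV" by (simp add: t0_def t0_raw)

lemma u0_norm: assumes "v \<in> l2 UNIV" shows "l2norm (u0 v) = l2norm v"
proof -
  have "SS (u0 v) \<le> SS v" using assms by (simp add: u0_def u0_raw)
  moreover have "SS (t0 (u0 v)) \<le> SS (u0 v)" using u0_l2[of v] by (simp add: t0_def t0_raw)
  ultimately show ?thesis using assms by (simp add: l2norm_SS)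
qed

lemma t0_norm: assumes "w \<in> l2 J2" shows "l2norm (t0 w) = l2norm w"
  using u0_norm[OF t0_l2[of w]] assms by simp

lemma u0_bop: "u0 \<in> bop UNIV J2"
proof (rule bop_intro[where F="\<lambda>v. blk (\<lambda>k. v (2*k)) (\<lambda>k. v (Suc (2*k)))" and C=1])
  fix v :: "nat vec" assume v: "v \<in> l2 UNIV"
  show "l2norm (blk (\<lambda>k. v (2*k)) (\<lambda>k. v (Suc (2*k)))) \<le> 1 * l2norm v"
    using u0_norm[OF v] v by (simp add: u0_def)
next
  fix v :: "nat vec" assume v: "v \<in> l2 UNIV"
  show "blk (\<lambda>k. v (2*k)) (\<lambda>k. v (Suc (2*k))) \<in> l2 J2" by (rule u0_raw(1)[OF v])
next
  fix u v :: "nat vec" and a b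
  show "blk (\<lambda>k. a * u (2*k) + b * v (2*k)) (\<lambda>k. a * u (Suc (2*k)) + b * v (Suc (2*k))) =
    (\<lambda>j. a * blk (\<lambda>k. u (2*k)) (\<lambda>k. u (Suc (2*k))) j + b * blk (\<lambda>k. v (2*k)) (\<lambda>k. v (Suc (2*k))) j)"
    by (auto simp: blk_def)
qed (simp add: u0_def)

lemma t0_bop: "t0 \<in> bop J2 UNIV"
proof (rule bop_intro[where F="\<lambda>w. (\<lambda>m. w (m mod 2, m div 2))" and C=1])
  fix v :: "(nat\<times>nat) vec" assume v: "v \<in> l2 J2"
  show "l2norm (\<lambda>m. v (m mod 2, m div 2)) \<le> 1 * l2norm v"
    using t0_norm[OF v] v by (simp add: t0_def)
qed (auto simp: t0_def t0_raw)

lemma unitary_u0: "unitary_pair UNIV J2 u0 t0"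
  unfolding unitary_pair_def inv_pair_def using u0_bop t0_bop u0_norm by auto

lemma inv_pair_comp: assumes "inv_pair I J s t" "inv_pair J K s' t'" shows "inv_pair I K (s' \<circ> s) (t \<circ> t')"
proof -
  have b: "s \<in> bop I J" "t \<in> bop J I" "s' \<in> bop J K" "t' \<in> bop K J" using assms by (auto simp: inv_pair_def)
  have "t (t' (s' (s v))) = v" if "v \<in> l2 I" for v
    using assms that bop_l2[OF b(1) that] by (simp add: inv_pair_def)
  moreover have "s' (s (t (t' w))) = w" if "w \<in> l2 K" for w
    using assms that bop_l2[OF b(4) that] by (simp add: inv_pair_def)
  ultimately show ?thesis unfolding inv_pair_def using bop_comp[OF b(1) b(3)] bop_comp[OF b(4) b(2)] by simp
qed

lemma unitary_comp: assumes "unitary_pair I J s t" "unitary_pair J K s' t'" shows "unitary_pair I K (s' \<circ> s) (t \<circ> t')"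
proof -
  have b: "s \<in> bop I J" using assms by (auto simp: unitary_pair_def inv_pair_def)
  have "l2norm (s' (s v)) = l2norm v" if "v \<in> l2 I" for v
    using assms that bop_l2[OF b that] by (simp add: unitary_pair_def)
  moreover have "inv_pair I K (s' \<circ> s) (t \<circ> t')" using assms inv_pair_comp unfolding unitary_pair_def by blast
  ultimately show ?thesis unfolding unitary_pair_def by simp
qed

lemma unitary_inv: assumes "unitary_pair I J s t" shows "unitary_pair J I t s"
proof -
  have "l2norm (t w) = l2norm w" if "w \<in> l2 J" for w
    using assms that unfolding unitary_pair_def inv_pair_def by (metis bop_l2)
  then show ?thesis using assms unfolding unitary_pair_def inv_pair_def by auto
qed

lemma unitary_norm1: "unitary_pair I J s t \<Longrightarrow> v \<in> l2 I \<Longrightarrow> l2norm (s v) = l2norm v"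
  by (simp add: unitary_pair_def)
lemma unitary_norm2: "unitary_pair I J s t \<Longrightarrow> w \<in> l2 J \<Longrightarrow> l2norm (t w) = l2norm w"
  using unitary_inv unitary_norm1 by blast

lemma enat_lt2: "enat n < 2 \<longleftrightarrow> n < 2" by (simp add: numeral_eq_enat)

lemma l2_J2_eq': assumes "w \<in> l2 J2" shows "w = blk (Pn 0 w) (Pn (Suc 0) w)"
  using l2_J2_eq[OF assms] by simp

definition tz :: "'a tup" where "tz = (\<lambda>i v j. 0)"
lemma tz_BT: "tz \<in> BT m J"
  unfolding BT_def tz_def using bop_intro[of "\<lambda>v j. 0" J "\<lambda>v j. 0" J 0] by auto

lemma BT_lin: assumes "z \<in> BT m J" "u \<in> l2 J" "v \<in> l2 J"
  shows "z i (\<lambda>k. a * u k + b * v k) = (\<lambda>j. a * z i u j + b * z i v j)"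
  by (cases "i < m") (use assms in \<open>auto simp: BT_def bop_lin\<close>)

lemma dsum2_eq: "dsum 2 (pair2 a b) i w = (if w \<in> l2 J2 then blk (a i (Pn 0 w)) (b i (Pn (Suc 0) w)) else (\<lambda>_. 0))"
proof (cases "w \<in> l2 J2")
  case True
  show ?thesis
  proof
    fix j :: "nat\<times>nat" obtain n k where j: "j = (n,k)" by (cases j)
    show "dsum 2 (pair2 a b) i w j = (if w \<in> l2 J2 then blk (a i (Pn 0 w)) (b i (Pn (Suc 0) w)) else (\<lambda>_. 0)) j"
      using True unfolding j dsum_def by (auto simp: enat_lt2 blk_def pair2_def Pn_def)
  qed
qed (simp add: dsum_def)

definition Scl :: "complex \<Rightarrow> (nat\<times>nat) vec \<Rightarrow> (nat\<times>nat) vec" where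
  "Scl c w = (if w \<in> l2 J2 then blk (\<lambda>k. Pn 0 w k + c * Pn (Suc 0) w k) (Pn (Suc 0) w) else (\<lambda>_. 0))"

lemma Scl_raw: assumes "w \<in> l2 J2"
  shows "blk (\<lambda>k. Pn 0 w k + c * Pn (Suc 0) w k) (Pn (Suc 0) w) \<in> l2 J2"
    "l2norm (blk (\<lambda>k. Pn 0 w k + c * Pn (Suc 0) w k) (Pn (Suc 0) w)) \<le> (2 + cmod c) * l2norm w"
proof -
  have p: "Pn 0 w \<in> l2 UNIV" "Pn (Suc 0) w \<in> l2 UNIV" using Pn_l2 assms by auto
  have q: "(\<lambda>k. Pn 0 w k + c * Pn (Suc 0) w k) \<in> l2 UNIV" using l2_lc[OF p, of 1 c] by simp
  show "blk (\<lambda>k. Pn 0 w k + c * Pn (Suc 0) w k) (Pn (Suc 0) w) \<in> l2 J2" by (rule blk_l2(1)[OF q p(2)])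
  have "l2norm (\<lambda>k. Pn 0 w k + c * Pn (Suc 0) w k) \<le> cmod 1 * l2norm (Pn 0 w) + cmod c * l2norm (Pn (Suc 0) w)"
    using lc_l2(2)[OF l2_summ[OF p(1)] l2_summ[OF p(2)], of 1 c] by simp
  also have "\<dots> \<le> l2norm w + cmod c * l2norm w"
    using Pn_l2(2)[OF assms, of 0] Pn_l2(2)[OF assms, of "Suc 0"] by (simp add: add_mono mult_left_mono)
  finally have "l2norm (blk (\<lambda>k. Pn 0 w k + c * Pn (Suc 0) w k) (Pn (Suc 0) w)) \<le> l2norm w + cmod c * l2norm w + l2norm w"
    using blk_l2(2)[OF q p(2)] Pn_l2(2)[OF assms, of "Suc 0"] by linarith
  then show "l2norm (blk (\<lambda>k. Pn 0 w k + c * Pn (Suc 0) w k) (Pn (Suc 0) w)) \<le> (2 + cmod c) * l2norm w"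
    by (simp add: algebra_simps)
qed

lemma Scl_bop: "Scl c \<in> bop J2 J2"
proof (rule bop_intro[where F="\<lambda>w. blk (\<lambda>k. Pn 0 w k + c * Pn (Suc 0) w k) (Pn (Suc 0) w)" and C="2 + cmod c"])
  fix u v :: "(nat\<times>nat) vec" and a b
  show "blk (\<lambda>k. Pn 0 (\<lambda>i. a * u i + b * v i) k + c * Pn (Suc 0) (\<lambda>i. a * u i + b * v i) k) (Pn (Suc 0) (\<lambda>i. a * u i + b * v i)) =
    (\<lambda>j. a * blk (\<lambda>k. Pn 0 u k + c * Pn (Suc 0) u k) (Pn (Suc 0) u) j + b * blk (\<lambda>k. Pn 0 v k + c * Pn (Suc 0) v k) (Pn (Suc 0) v) j)"
    by (auto simp: blk_def Pn_def algebra_simps)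
qed (auto simp: Scl_def Scl_raw)

lemma Scl_l2: "Scl c w \<in> l2 J2" by (simp add: Scl_def Scl_raw)

lemma Scl_inv: assumes "w \<in> l2 J2" shows "Scl (-c) (Scl c w) = w"
proof -
  have "Scl (-c) (Scl c w) = blk (Pn 0 w) (Pn (Suc 0) w)"
    using assms Scl_raw(1)[OF assms, of c] by (simp add: Scl_def)
  then show ?thesis using l2_J2_eq'[OF assms] by simp
qed

lemma Scl_inv_pair: "inv_pair J2 J2 (Scl c) (Scl (-c))"
  unfolding inv_pair_def using Scl_bop Scl_inv[of _ c] Scl_inv[of _ "-c"] by auto

lemma Scl_0: "w \<in> l2 J2 \<Longrightarrow> Scl 0 w = w"
  using l2_J2_eq'[of w] by (simp add: Scl_def)

(* upper triangular operator on H^(2) *)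
definition tri :: "nat op \<Rightarrow> nat op \<Rightarrow> nat op \<Rightarrow> (nat\<times>nat) op" where
  "tri a b h w = (if w \<in> l2 J2 then blk (\<lambda>k. a (Pn 0 w) k + h (Pn (Suc 0) w) k) (b (Pn (Suc 0) w)) else (\<lambda>_. 0))"

lemma tri_raw: assumes a: "a \<in> bop UNIV UNIV" and b: "b \<in> bop UNIV UNIV" and h: "h \<in> bop UNIV UNIV" and w: "w \<in> l2 J2"
  shows "blk (\<lambda>k. a (Pn 0 w) k + h (Pn (Suc 0) w) k) (b (Pn (Suc 0) w)) \<in> l2 J2"
    "l2norm (blk (\<lambda>k. a (Pn 0 w) k + h (Pn (Suc 0) w) k) (b (Pn (Suc 0) w))) \<le> (opnorm UNIV a + opnorm UNIV b + opnorm UNIV h) * l2norm w"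
proof -
  have p: "Pn 0 w \<in> l2 UNIV" "Pn (Suc 0) w \<in> l2 UNIV" using Pn_l2 w by auto
  have q: "a (Pn 0 w) \<in> l2 UNIV" "h (Pn (Suc 0) w) \<in> l2 UNIV" "b (Pn (Suc 0) w) \<in> l2 UNIV"
    using bop_l2 a b h p by auto
  have q2: "(\<lambda>k. a (Pn 0 w) k + h (Pn (Suc 0) w) k) \<in> l2 UNIV" by (rule l2_add[OF q(1,2)])
  show "blk (\<lambda>k. a (Pn 0 w) k + h (Pn (Suc 0) w) k) (b (Pn (Suc 0) w)) \<in> l2 J2" by (rule blk_l2(1)[OF q2 q(3)])
  have n: "l2norm (a (Pn 0 w)) \<le> opnorm UNIV a * l2norm w" "l2norm (h (Pn (Suc 0) w)) \<le> opnorm UNIV h * l2norm w"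
     "l2norm (b (Pn (Suc 0) w)) \<le> opnorm UNIV b * l2norm w"
    using opnorm_bound[OF a p(1)] opnorm_bound[OF h p(2)] opnorm_bound[OF b p(2)]
      Pn_l2(2)[OF w, of 0] Pn_l2(2)[OF w, of "Suc 0"] opnorm_nonneg[OF a] opnorm_nonneg[OF b] opnorm_nonneg[OF h]
    by (meson mult_left_mono order_trans)+
  have "l2norm (blk (\<lambda>k. a (Pn 0 w) k + h (Pn (Suc 0) w) k) (b (Pn (Suc 0) w))) \<le> l2norm (\<lambda>k. a (Pn 0 w) k + h (Pn (Suc 0) w) k) + l2norm (b (Pn (Suc 0) w))"
    by (rule blk_l2(2)[OF q2 q(3)])
  also have "\<dots> \<le> l2norm (a (Pn 0 w)) + l2norm (h (Pn (Suc 0) w)) + l2norm (b (Pn (Suc 0) w))"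
    using l2norm_add[OF q(1,2)] by linarith
  also have "\<dots> \<le> (opnorm UNIV a + opnorm UNIV b + opnorm UNIV h) * l2norm w" using n by (simp add: algebra_simps)
  finally show "l2norm (blk (\<lambda>k. a (Pn 0 w) k + h (Pn (Suc 0) w) k) (b (Pn (Suc 0) w))) \<le> (opnorm UNIV a + opnorm UNIV b + opnorm UNIV h) * l2norm w" .
qed

lemma tri_bop: assumes a: "a \<in> bop UNIV UNIV" and b: "b \<in> bop UNIV UNIV" and h: "h \<in> bop UNIV UNIV"
  shows "tri a b h \<in> bop J2 J2"
proof (rule bop_intro[where F="\<lambda>w. blk (\<lambda>k. a (Pn 0 w) k + h (Pn (Suc 0) w) k) (b (Pn (Suc 0) w))"
      and C="opnorm UNIV a + opnorm UNIV b + opnorm UNIV h"])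
  fix u v :: "(nat\<times>nat) vec" and c d assume u: "u \<in> l2 J2" and v: "v \<in> l2 J2"
  have p: "Pn 0 u \<in> l2 UNIV" "Pn (Suc 0) u \<in> l2 UNIV" "Pn 0 v \<in> l2 UNIV" "Pn (Suc 0) v \<in> l2 UNIV" using Pn_l2 u v by auto
  show "blk (\<lambda>k. a (Pn 0 (\<lambda>i. c * u i + d * v i)) k + h (Pn (Suc 0) (\<lambda>i. c * u i + d * v i)) k) (b (Pn (Suc 0) (\<lambda>i. c * u i + d * v i))) =
    (\<lambda>j. c * blk (\<lambda>k. a (Pn 0 u) k + h (Pn (Suc 0) u) k) (b (Pn (Suc 0) u)) j + d * blk (\<lambda>k. a (Pn 0 v) k + h (Pn (Suc 0) v) k) (b (Pn (Suc 0) v)) j)"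
    unfolding Pn_lin bop_lin[OF a p(1,3)] bop_lin[OF b p(2,4)] bop_lin[OF h p(2,4)]
    by (auto simp: blk_def algebra_simps)
qed (auto simp: tri_def tri_raw[OF a b h])

lemma tri_zero: "tri (\<lambda>v j. 0) (\<lambda>v j. 0) (\<lambda>v j. 0) w = (\<lambda>_. 0)"
  by (simp add: tri_def)

lemma BT_tri_l2: assumes "a \<in> BT m UNIV" "b \<in> BT m UNIV" "h \<in> BT m UNIV" "w \<in> l2 J2"
  shows "tri (a i) (b i) (h i) w \<in> l2 J2"
proof (cases "i < m")
  case True then show ?thesis using assms tri_raw(1)[OF BT_bop BT_bop BT_bop] by (simp add: tri_def)
next
  case False
  then have "a i = (\<lambda>v _. 0)" "b i = (\<lambda>v _. 0)" "h i = (\<lambda>v _. 0)" using assms BT_hi[of _ m UNIV i] by auto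
  then show ?thesis by (simp add: tri_zero)
qed

definition Ttri :: "nat tup \<Rightarrow> nat tup \<Rightarrow> nat tup \<Rightarrow> nat tup" where
  "Ttri a b h = (\<lambda>i v. t0 (tri (a i) (b i) (h i) (u0 v)))"

lemma Ttri_BT: assumes "a \<in> BT m UNIV" "b \<in> BT m UNIV" "h \<in> BT m UNIV"
  shows "Ttri a b h \<in> BT m UNIV"
proof -
  have "Ttri a b h i \<in> bop UNIV UNIV" if "i < m" for i
  proof -
    have "Ttri a b h i = t0 \<circ> tri (a i) (b i) (h i) \<circ> u0" by (auto simp: Ttri_def)
    moreover have "tri (a i) (b i) (h i) \<in> bop J2 J2" using tri_bop BT_bop assms that by blast
    ultimately show ?thesis using bop_comp[OF bop_comp[OF u0_bop] t0_bop] by (simp add: comp_assoc)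
  qed
  moreover have "Ttri a b h i = (\<lambda>v _. 0)" if "m \<le> i" for i
    using BT_hi[OF assms(1) that] BT_hi[OF assms(2) that] BT_hi[OF assms(3) that]
    by (auto simp: Ttri_def tri_zero bop_zero[OF t0_bop])
  ultimately show ?thesis by (auto simp: BT_def)
qed

lemma Ttri_norm: assumes "a \<in> BT m UNIV" "b \<in> BT m UNIV" "h \<in> BT m UNIV"
  shows "tnorm m UNIV (Ttri a b h) \<le> tnorm m UNIV a + tnorm m UNIV b + tnorm m UNIV h"
proof (rule tnorm_le2)
  show "0 \<le> tnorm m UNIV a + tnorm m UNIV b + tnorm m UNIV h" by (simp add: tnorm_nonneg)
  fix i v assume i: "i < m" and v: "(v::nat vec) \<in> l2 UNIV"
  have bo: "a i \<in> bop UNIV UNIV" "b i \<in> bop UNIV UNIV" "h i \<in> bop UNIV UNIV" using assms i BT_bop by auto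
  have "l2norm (Ttri a b h i v) = l2norm (tri (a i) (b i) (h i) (u0 v))"
    unfolding Ttri_def using t0_norm BT_tri_l2[OF assms u0_l2] by simp
  also have "\<dots> \<le> (opnorm UNIV (a i) + opnorm UNIV (b i) + opnorm UNIV (h i)) * l2norm (u0 v)"
    using tri_raw(2)[OF bo u0_l2] u0_l2 by (simp add: tri_def)
  also have "\<dots> \<le> (tnorm m UNIV a + tnorm m UNIV b + tnorm m UNIV h) * l2norm v"
    using u0_norm[OF v] tnorm_ge[OF i, of UNIV a] tnorm_ge[OF i, of UNIV b] tnorm_ge[OF i, of UNIV h]
    by (simp add: mult_right_mono l2norm_nonneg add_mono)
  finally show "l2norm (Ttri a b h i v) \<le> (tnorm m UNIV a + tnorm m UNIV b + tnorm m UNIV h) * l2norm v" .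
qed

lemma Ttri_sub: assumes "a \<in> BT m UNIV" "b \<in> BT m UNIV" "h \<in> BT m UNIV" "a' \<in> BT m UNIV" "b' \<in> BT m UNIV" "h' \<in> BT m UNIV"
  shows "tsub (Ttri a b h) (Ttri a' b' h') = Ttri (tsub a a') (tsub b b') (tsub h h')"
proof (intro ext)
  fix i v j
  have e: "tri (tsub a a' i) (tsub b b' i) (tsub h h' i) (u0 v) =
      (\<lambda>j. tri (a i) (b i) (h i) (u0 v) j - tri (a' i) (b' i) (h' i) (u0 v) j)"
    using u0_l2[of v] by (auto simp: tri_def tsub_def blk_def)
  show "tsub (Ttri a b h) (Ttri a' b' h') i v j = Ttri (tsub a a') (tsub b b') (tsub h h') i v j"
    unfolding Ttri_def tsub_def[of "\<lambda>i v. t0 (tri (a i) (b i) (h i) (u0 v))"] e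
    using bop_diff[OF t0_bop BT_tri_l2[OF assms(1-3) u0_l2] BT_tri_l2[OF assms(4-6) u0_l2]]
    by (simp add: tsub_def)
qed

definition P0op :: "(nat\<times>nat) vec \<Rightarrow> nat vec" where "P0op w = (if w \<in> l2 J2 then Pn 0 w else (\<lambda>_. 0))"
definition E1op :: "nat vec \<Rightarrow> (nat\<times>nat) vec" where "E1op v = (if v \<in> l2 UNIV then blk (\<lambda>_. 0) v else (\<lambda>_. 0))"

lemma Pn_zero[simp]: "Pn n (\<lambda>_. 0) = (\<lambda>_. 0)" by (simp add: Pn_def)

lemma P0op_bop: "P0op \<in> bop J2 UNIV"
  by (rule bop_intro[where F="Pn 0" and C=1]) (auto simp: P0op_def Pn_l2 Pn_lin)

lemma E1op_bop: "E1op \<in> bop UNIV J2"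
proof (rule bop_intro[where F="blk (\<lambda>_. 0)" and C=1])
  fix u v :: "nat vec" and a b
  show "blk (\<lambda>_. 0) (\<lambda>i. a * u i + b * v i) = (\<lambda>j. a * blk (\<lambda>_. 0) u j + b * blk (\<lambda>_. 0) v j)"
    by (auto simp: blk_def)
qed (auto simp: E1op_def blk1_l2)

definition B12 :: "nat tup \<Rightarrow> nat tup" where "B12 z = (\<lambda>i. P0op \<circ> u0 \<circ> z i \<circ> t0 \<circ> E1op)"

lemma B12_BT: assumes "z \<in> BT m UNIV" shows "B12 z \<in> BT m UNIV"
proof -
  have "B12 z i \<in> bop UNIV UNIV" if "i < m" for i
    unfolding B12_def using bop_comp[OF bop_comp[OF bop_comp[OF bop_comp[OF E1op_bop t0_bop] BT_bop[OF assms that]] u0_bop] P0op_bop]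
    by (simp add: comp_assoc)
  moreover have "B12 z i = (\<lambda>v _. 0)" if "m \<le> i" for i
    using BT_hi[OF assms that] by (auto simp: B12_def bop_zero[OF u0_bop] bop_zero[OF P0op_bop])
  ultimately show ?thesis by (auto simp: BT_def)
qed

lemma B12_norm: assumes "z \<in> BT m UNIV" shows "tnorm m UNIV (B12 z) \<le> tnorm m UNIV z"
proof (rule tnorm_le2[OF tnorm_nonneg])
  fix i v assume i: "i < m" and v: "(v::nat vec) \<in> l2 UNIV"
  have e: "E1op v \<in> l2 J2" "l2norm (E1op v) \<le> l2norm v" using v blk1_l2 by (auto simp: E1op_def)
  have t: "t0 (E1op v) \<in> l2 UNIV" "l2norm (t0 (E1op v)) = l2norm (E1op v)" using t0_l2 t0_norm[OF e(1)] by auto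
  have zz: "z i (t0 (E1op v)) \<in> l2 UNIV" by (rule BT_l2[OF assms t(1)])
  have "l2norm (B12 z i v) = l2norm (Pn 0 (u0 (z i (t0 (E1op v)))))" by (simp add: B12_def P0op_def u0_l2)
  also have "\<dots> \<le> l2norm (u0 (z i (t0 (E1op v))))" by (rule Pn_l2(2)[OF u0_l2])
  also have "\<dots> = l2norm (z i (t0 (E1op v)))" by (rule u0_norm[OF zz])
  also have "\<dots> \<le> tnorm m UNIV z * l2norm (t0 (E1op v))" by (rule tnorm_bound[OF assms i t(1)])
  also have "\<dots> \<le> tnorm m UNIV z * l2norm v" using t(2) e(2) by (simp add: mult_left_mono tnorm_nonneg)
  finally show "l2norm (B12 z i v) \<le> tnorm m UNIV z * l2norm v" .
qed

lemma B12_Ttri: assumes "a \<in> BT m UNIV" "b \<in> BT m UNIV" "h \<in> BT m UNIV"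
  shows "B12 (Ttri a b h) = h"
proof (rule ext, rule ext)
  fix i and v :: "nat vec"
  have hz: "h i (\<lambda>_. 0) = (\<lambda>_. 0)" "a i (\<lambda>_. 0) = (\<lambda>_. 0)" "b i (\<lambda>_. 0) = (\<lambda>_. 0)" using assms
      by (cases "i < m"; auto simp: BT_def bop_zero)+
  show "B12 (Ttri a b h) i v = h i v"
  proof (cases "v \<in> l2 UNIV")
    case False
    have "h i v = (\<lambda>_. 0)" using False assms(3) by (cases "i < m") (auto simp: BT_def bop_off)
    then show ?thesis using False hz
      by (simp add: B12_def E1op_def Ttri_def bop_zero[OF t0_bop] bop_zero[OF u0_bop] bop_zero[OF P0op_bop] tri_def)
  next
    case True
    have e: "E1op v \<in> l2 J2" using True blk1_l2 by (auto simp: E1op_def)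
    have "tri (a i) (b i) (h i) (E1op v) = blk (h i v) (b i v)"
      using e True hz by (simp add: tri_def E1op_def)
    moreover have "blk (h i v) (b i v) \<in> l2 J2" by (rule blk_l2(1)[OF BT_l2[OF assms(3) True] BT_l2[OF assms(2) True]])
    ultimately show ?thesis using e by (simp add: B12_def Ttri_def P0op_def)
  qed
qed

lemma B12_sub: assumes "z \<in> BT m UNIV" "z' \<in> BT m UNIV"
  shows "B12 (tsub z z') = tsub (B12 z) (B12 z')"
proof (rule ext, rule ext, rule ext)
  fix i and v :: "nat vec" and j
  let ?x = "t0 (E1op v)"
  have x: "?x \<in> l2 UNIV" by (rule t0_l2)
  have zz: "z i ?x \<in> l2 UNIV" "z' i ?x \<in> l2 UNIV" using BT_l2[OF assms(1) x] BT_l2[OF assms(2) x] by auto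
  have e: "u0 (\<lambda>j. z i ?x j - z' i ?x j) = (\<lambda>j. u0 (z i ?x) j - u0 (z' i ?x) j)"
    using bop_diff[OF u0_bop zz] by simp
  show "B12 (tsub z z') i v j = tsub (B12 z) (B12 z') i v j"
    using l2_diff[OF u0_l2 u0_l2, of "z i ?x" "z' i ?x"] by (simp add: B12_def tsub_def P0op_def u0_l2 Pn_def e)
qed

lemma conj_shear: assumes a: "a \<in> BT m UNIV" and b: "b \<in> BT m UNIV"
  shows "conj (t0 \<circ> Scl (-c)) (dsum 2 (pair2 a b)) (Scl c \<circ> u0) = Ttri a b (tscale c (tsub a b))"
proof (rule ext, rule ext)
  fix i and v :: "nat vec"
  let ?w = "u0 v"
  have w: "?w \<in> l2 J2" by (rule u0_l2)
  have p: "Pn 0 ?w \<in> l2 UNIV" "Pn (Suc 0) ?w \<in> l2 UNIV" using Pn_l2 w by auto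
  have s: "Scl c ?w = blk (\<lambda>k. Pn 0 ?w k + c * Pn (Suc 0) ?w k) (Pn (Suc 0) ?w)" using w by (simp add: Scl_def)
  have lin: "a i (\<lambda>k. Pn 0 ?w k + c * Pn (Suc 0) ?w k) = (\<lambda>j. a i (Pn 0 ?w) j + c * a i (Pn (Suc 0) ?w) j)"
    using BT_lin[OF a p, where i=i and a=1 and b=c] by simp
  have d: "dsum 2 (pair2 a b) i (Scl c ?w) = blk (\<lambda>j. a i (Pn 0 ?w) j + c * a i (Pn (Suc 0) ?w) j) (b i (Pn (Suc 0) ?w))"
    using Scl_l2[of c ?w] by (simp add: dsum2_eq s lin)
  have dl: "blk (\<lambda>j. a i (Pn 0 ?w) j + c * a i (Pn (Suc 0) ?w) j) (b i (Pn (Suc 0) ?w)) \<in> l2 J2"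
    using blk_l2(1)[OF l2_lc[OF BT_l2[OF a p(1)] BT_l2[OF a p(2)], where a=1 and b=c] BT_l2[OF b p(2)]] by simp
  have "Scl (-c) (dsum 2 (pair2 a b) i (Scl c ?w)) = tri (a i) (b i) (tscale c (tsub a b) i) ?w"
    unfolding d using dl w by (simp add: Scl_def tri_def tscale_def tsub_def algebra_simps)
  then show "conj (t0 \<circ> Scl (-c)) (dsum 2 (pair2 a b)) (Scl c \<circ> u0) i v = Ttri a b (tscale c (tsub a b)) i v"
    by (simp add: conj_def Ttri_def)
qed

lemma shear_inv_pair: "inv_pair UNIV J2 (Scl c \<circ> u0) (t0 \<circ> Scl (-c))"
  using inv_pair_comp[OF _ Scl_inv_pair] unitary_u0 unfolding unitary_pair_def by blast

lemma conj_diag: assumes a: "a \<in> BT m UNIV" and b: "b \<in> BT m UNIV"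
  shows "conj t0 (dsum 2 (pair2 a b)) u0 = Ttri a b tz"
proof (rule ext, rule ext)
  fix i and v :: "nat vec"
  show "conj t0 (dsum 2 (pair2 a b)) u0 i v = Ttri a b tz i v"
    using u0_l2[of v] by (simp add: conj_def Ttri_def dsum2_eq tri_def tz_def)
qed

lemma dsum2_l2: assumes a: "a \<in> BT m UNIV" and b: "b \<in> BT m UNIV" and w: "w \<in> l2 J2"
  shows "dsum 2 (pair2 a b) i w \<in> l2 J2"
proof -
  have p: "Pn 0 w \<in> l2 UNIV" "Pn (Suc 0) w \<in> l2 UNIV" using Pn_l2 w by auto
  show ?thesis using w blk_l2(1)[OF BT_l2[OF a p(1)] BT_l2[OF b p(2)]] by (simp add: dsum2_eq)
qed

lemma tnorm_eq0: fixes z :: "nat tup" assumes "z \<in> BT m UNIV" "tnorm m UNIV z = 0" shows "z = tz"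
proof (rule ext, rule ext)
  fix i and v :: "nat vec"
  show "z i v = tz i v"
  proof (cases "i < m")
    case True
    show ?thesis
    proof (cases "v \<in> l2 UNIV")
      case True
      have "l2norm (z i v) \<le> 0" using tnorm_bound[OF assms(1) \<open>i < m\<close> True] assms(2) by simp
      then have "l2norm (z i v) = 0" using l2norm_nonneg[of "z i v"] by linarith
      then show ?thesis using l2norm_eq0[OF BT_l2[OF assms(1) True]] by (simp add: tz_def)
    next
      case False then show ?thesis using bop_off[OF BT_bop[OF assms(1) \<open>i < m\<close>]] by (simp add: tz_def)
    qed
  next
    case False then show ?thesis using BT_hi[OF assms(1)] by (simp add: tz_def)
  qed
qed

lemma tsub_eq0: fixes x y :: "nat tup" assumes "x \<in> BT m UNIV" "y \<in> BT m UNIV" "tnorm m UNIV (tsub x y) = 0" shows "x = y"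
proof -
  have "tsub x y = tz" by (rule tnorm_eq0[OF tsub_BT[OF assms(1,2)] assms(3)])
  then show ?thesis by (auto simp: fun_eq_iff tsub_def tz_def)
qed

lemma tnorm_tz[simp]: "tnorm m J tz = 0"
proof -
  have "tnorm m J tz \<le> 0" by (rule tnorm_le2) (auto simp: tz_def)
  then show ?thesis using tnorm_nonneg[of m J tz] by linarith
qed

locale ncl =
  fixes d r :: nat and \<Omega> :: "H tup set" and f :: "H tup \<Rightarrow> H tup" and \<Omega>s :: "nat \<Rightarrow> H tup set"
  assumes dom: "\<Omega> \<subseteq> BT d UNIV"
    and sub: "\<And>k. \<Omega>s k \<subseteq> \<Omega>" and un: "\<Omega> = (\<Union>k. \<Omega>s k)"
    and int: "\<And>k x. x \<in> \<Omega>s k \<Longrightarrow> \<exists>\<epsilon>>0. \<forall>y\<in>BT d UNIV. tnorm d UNIV (tsub y x) < \<epsilon> \<longrightarrow> y \<in> \<Omega>s (Suc k)"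
    and bdd: "\<And>k. \<exists>C. \<forall>x\<in>\<Omega>s k. tnorm d UNIV x \<le> C"
    and uinv: "\<And>k x u t. x \<in> \<Omega>s k \<Longrightarrow> unitary_pair (UNIV :: H set) UNIV u t \<Longrightarrow> conj t x u \<in> \<Omega>s k"
    and dsums: "\<And>k l x. 1 \<le> l \<Longrightarrow> (\<forall>n. enat n < l \<longrightarrow> x n \<in> \<Omega>s k) \<Longrightarrow>
          (\<exists>u t. unitary_pair (UNIV :: H set) (Jset l) u t \<and> conj t (dsum l x) u \<in> \<Omega>s k)"
    and fBT: "\<And>x. x \<in> \<Omega> \<Longrightarrow> f x \<in> BT r UNIV"
    and fnc: "\<And>x y s t. x \<in> \<Omega> \<Longrightarrow> y \<in> \<Omega> \<Longrightarrow> inv_pair (UNIV :: H set) (Jset 2) s t \<Longrightarrow>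
        conj t (dsum 2 (pair2 x y)) s \<in> \<Omega> \<Longrightarrow>
        f (conj t (dsum 2 (pair2 x y)) s) = conj t (dsum 2 (pair2 (f x) (f y))) s"

lemma ncl_intro: assumes "nc_domain d \<Omega>" "nc_function d r \<Omega> f" shows "\<exists>\<Omega>s. ncl d r \<Omega> f \<Omega>s"
proof -
  obtain \<Omega>s where o: "(\<forall>k. \<Omega>s k \<subseteq> \<Omega>) \<and> \<Omega> = (\<Union>k. \<Omega>s k)
     \<and> (\<forall>k. \<forall>x\<in>\<Omega>s k. \<exists>\<epsilon>>0. \<forall>y\<in>BT d UNIV. tnorm d UNIV (tsub y x) < \<epsilon> \<longrightarrow> y \<in> \<Omega>s (Suc k))
     \<and> (\<forall>k. \<exists>C. \<forall>x\<in>\<Omega>s k. tnorm d UNIV x \<le> C)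
     \<and> (\<forall>k. \<forall>x\<in>\<Omega>s k. \<forall>u t. unitary_pair (UNIV :: H set) UNIV u t \<longrightarrow> conj t x u \<in> \<Omega>s k)
     \<and> (\<forall>k. \<forall>l::enat. 1 \<le> l \<longrightarrow> (\<forall>x. (\<forall>n. enat n < l \<longrightarrow> x n \<in> \<Omega>s k) \<longrightarrow>
          (\<exists>u t. unitary_pair (UNIV :: H set) (Jset l) u t \<and> conj t (dsum l x) u \<in> \<Omega>s k)))"
    and d: "\<Omega> \<subseteq> BT d UNIV" using assms(1) unfolding nc_domain_def by blast
  have "ncl d r \<Omega> f \<Omega>s"
    apply unfold_locales
    using o d assms(2) unfolding nc_function_def by blast+
  then show ?thesis by blast
qed

context ncl begin

abbreviation "Nd \<equiv> tnorm d UNIV"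
abbreviation "Nr \<equiv> tnorm r UNIV"

lemma \<Omega>_BT: "x \<in> \<Omega> \<Longrightarrow> x \<in> BT d UNIV" using dom by blast
lemma \<Omega>s_\<Omega>: "x \<in> \<Omega>s k \<Longrightarrow> x \<in> \<Omega>" using sub by blast
lemma \<Omega>_ex: "x \<in> \<Omega> \<Longrightarrow> \<exists>k. x \<in> \<Omega>s k" using un by blast

lemma \<Omega>s_Suc: assumes "x \<in> \<Omega>s k" shows "x \<in> \<Omega>s (Suc k)"
proof -
  obtain \<epsilon> where "\<epsilon> > 0" "\<forall>y\<in>BT d UNIV. tnorm d UNIV (tsub y x) < \<epsilon> \<longrightarrow> y \<in> \<Omega>s (Suc k)" using int[OF assms] by blast
  moreover have "tsub x x = tz" by (auto simp: tsub_def tz_def fun_eq_iff)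
  ultimately show ?thesis using \<Omega>_BT[OF \<Omega>s_\<Omega>[OF assms]] by simp
qed

lemma SIM: assumes x: "x \<in> \<Omega>" and y: "y \<in> \<Omega>" and T: "Ttri x y (tscale c (tsub x y)) \<in> \<Omega>"
  shows "f (Ttri x y (tscale c (tsub x y))) = Ttri (f x) (f y) (tscale c (tsub (f x) (f y)))"
  using fnc[OF x y shear_inv_pair[of c]] T
    conj_shear[OF \<Omega>_BT[OF x] \<Omega>_BT[OF y], of c] conj_shear[OF fBT[OF x] fBT[OF y], of c] by simp

lemma DIAG: assumes x: "x \<in> \<Omega>s k" shows "Ttri x x tz \<in> \<Omega>s k"
proof -
  have "\<forall>n. enat n < 2 \<longrightarrow> pair2 x x n \<in> \<Omega>s k" using x by (simp add: pair2_def)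
  then obtain u t where ut: "unitary_pair (UNIV :: H set) J2 u t" and D: "conj t (dsum 2 (pair2 x x)) u \<in> \<Omega>s k"
    using dsums[where k=k and l=2 and x="pair2 x x"] by (auto simp: one_le_numeral)
  have U: "unitary_pair (UNIV :: H set) UNIV (t \<circ> u0) (t0 \<circ> u)"
    by (rule unitary_comp[OF unitary_u0 unitary_inv[OF ut]])
  have xb: "x \<in> BT d UNIV" by (rule \<Omega>_BT[OF \<Omega>s_\<Omega>[OF x]])
  have inv: "u (t w) = w" if "w \<in> l2 J2" for w using ut that by (simp add: unitary_pair_def inv_pair_def)
  have "conj (t0 \<circ> u) (conj t (dsum 2 (pair2 x x)) u) (t \<circ> u0) = conj t0 (dsum 2 (pair2 x x)) u0"
  proof (rule ext, rule ext)
    fix i and v :: "nat vec"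
    show "conj (t0 \<circ> u) (conj t (dsum 2 (pair2 x x)) u) (t \<circ> u0) i v = conj t0 (dsum 2 (pair2 x x)) u0 i v"
      using inv[OF u0_l2[of v]] inv[OF dsum2_l2[OF xb xb u0_l2[of v]]] by (simp add: conj_def)
  qed
  then show ?thesis using uinv[OF D U] conj_diag[OF xb xb] by simp
qed

end

lemma SS_split2:
  fixes w :: "'i vec" and g :: "'j \<Rightarrow> 'i" and h :: "'k \<Rightarrow> 'i"
  assumes s: "nsq w summable_on UNIV" and ig: "inj g" and ih: "inj h" and dj: "range g \<inter> range h = {}"
    and z: "\<And>j. j \<notin> range g \<union> range h \<Longrightarrow> w j = 0"
  shows "SS w = SS (w \<circ> g) + SS (w \<circ> h)"
proof -
  have "SS w = infsum (nsq w) (range g \<union> range h)"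
    unfolding SS_def by (rule infsum_cong_neutral) (auto simp: nsq_def z)
  also have "\<dots> = infsum (nsq w) (range g) + infsum (nsq w) (range h)"
    by (rule infsum_Un_disjoint[OF summable_on_subset[OF s] summable_on_subset[OF s] dj]) auto
  also have "infsum (nsq w) (range g) = infsum (nsq w \<circ> g) UNIV"
    by (rule infsum_reindex) (use ig in \<open>simp add: inj_on_def inj_def\<close>)
  also have "infsum (nsq w) (range h) = infsum (nsq w \<circ> h) UNIV"
    by (rule infsum_reindex) (use ih in \<open>simp add: inj_on_def inj_def\<close>)
  finally show ?thesis by (simp add: SS_def nsq_def comp_def)
qed

lemma SS_blk: assumes "a \<in> l2 UNIV" "b \<in> l2 UNIV" shows "SS (blk a b) = SS a + SS b"
proof -
  have "SS (blk a b) = SS (blk a b \<circ> (\<lambda>k. (0,k))) + SS (blk a b \<circ> (\<lambda>k. (1,k)))"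
    by (rule SS_split2[OF l2_summ[OF blk_l2(1)[OF assms]]]) (auto simp: inj_def blk_def image_iff)
  then show ?thesis by (simp add: comp_def blk_def)
qed

lemma l2norm_blk: assumes "a \<in> l2 UNIV" "b \<in> l2 UNIV" shows "l2norm (blk a b) = sqrt (SS a + SS b)"
  using SS_blk[OF assms] by (simp add: l2norm_SS)

definition shift :: "(nat\<times>nat) vec \<Rightarrow> (nat\<times>nat) vec" where "shift w = (\<lambda>(n,k). w (Suc n, k))"
definition unshift :: "nat vec \<Rightarrow> (nat\<times>nat) vec \<Rightarrow> (nat\<times>nat) vec" where
  "unshift a b = (\<lambda>(n,k). if n = 0 then a k else b (n - 1, k))"

lemma shift_l2: assumes "w \<in> l2 UNIV" shows "shift w \<in> l2 UNIV"
proof -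
  have "nsq (shift w) summable_on UNIV"
    by (rule rearr(1)[OF l2_summ[OF assms], of "\<lambda>(n,k). (Suc n, k)" UNIV]) (auto simp: inj_on_def shift_def)
  then show ?thesis by (simp add: l2_iff)
qed

lemma SS_shift_split: assumes "w \<in> l2 UNIV" shows "SS w = SS (Pn 0 w) + SS (shift w)"
proof -
  have "SS w = SS (w \<circ> (\<lambda>k. (0,k))) + SS (w \<circ> (\<lambda>(n,k). (Suc n, k)))"
  proof (rule SS_split2[OF l2_summ[OF assms]])
    show "inj (\<lambda>(n::nat, k::nat). (Suc n, k))" by (auto simp: inj_def)
    show "range (\<lambda>k. (0::nat, k::nat)) \<inter> range (\<lambda>(n, k). (Suc n, k)) = {}" by auto
    fix j :: "nat \<times> nat" assume "j \<notin> range (\<lambda>k. (0, k)) \<union> range (\<lambda>(n, k). (Suc n, k))"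
    then show "w j = 0" by (cases j) (metis (no_types, lifting) UNIV_I UnI1 UnI2 case_prod_conv image_eqI not0_implies_Suc)
  qed (auto simp: inj_def)
  moreover have "w \<circ> (\<lambda>k. (0,k)) = Pn 0 w" "w \<circ> (\<lambda>(n,k). (Suc n, k)) = shift w"
    by (auto simp: Pn_def shift_def)
  ultimately show ?thesis by simp
qed

lemma unshift_l2: assumes a: "a \<in> l2 UNIV" and b: "b \<in> l2 UNIV" shows "unshift a b \<in> l2 UNIV"
proof -
  have p: "nsq (\<lambda>(n,k). if n = 0 then a k else 0) summable_on UNIV"
    by (rule rearr(1)[OF l2_summ[OF a], of snd "{0}\<times>UNIV"]) (auto simp: inj_on_def split: if_splits)
  have q: "nsq (\<lambda>(n,k). if n = 0 then 0 else b (n - 1, k)) summable_on UNIV"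
  proof (rule rearr(1)[OF l2_summ[OF b], of "\<lambda>(n::nat,k::nat). (n - 1, k)" "{j. fst j \<noteq> 0}"])
    have h: "(x::nat) \<noteq> 0 \<Longrightarrow> y \<noteq> 0 \<Longrightarrow> x - 1 = y - 1 \<Longrightarrow> x = y" for x y by arith
    show "inj_on (\<lambda>(n::nat, k::nat). (n - 1, k)) {j. fst j \<noteq> 0}" using h by (auto simp: inj_on_def)
  qed auto
  have "unshift a b = (\<lambda>j. (\<lambda>(n,k). if n = 0 then a k else 0) j + (\<lambda>(n,k). if n = 0 then 0 else b (n - 1, k)) j)"
    by (auto simp: unshift_def)
  then show ?thesis using l2_add[of "\<lambda>(n,k). if n = 0 then a k else 0" UNIV "\<lambda>(n,k). if n = 0 then 0 else b (n - 1, k)"] p q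
    by (simp add: l2_iff)
qed

lemma Pn_unshift[simp]: "Pn 0 (unshift a b) = a" by (simp add: Pn_def unshift_def)
lemma shift_unshift[simp]: "shift (unshift a b) = b" by (simp add: shift_def unshift_def)
lemma unshift_shift: "unshift (Pn 0 w) (shift w) = w"
  by (auto simp: unshift_def shift_def Pn_def fun_eq_iff)

lemma SS_unshift: assumes a: "a \<in> l2 UNIV" and b: "b \<in> l2 UNIV" shows "SS (unshift a b) = SS a + SS b"
  using SS_shift_split[OF unshift_l2[OF a b]] by simp

lemma sum_SS_Pn: assumes s: "nsq w summable_on UNIV" and G: "finite G"
  shows "(\<Sum>n\<in>G. SS (Pn n w)) \<le> SS w"
proof -
  have sG: "nsq w summable_on (G \<times> UNIV)" by (rule summable_on_subset[OF s]) auto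
  have "(\<Sum>n\<in>G. SS (Pn n w)) = (\<Sum>\<^sub>\<infinity>n\<in>G. \<Sum>\<^sub>\<infinity>k\<in>UNIV. nsq w (n, k))"
    using G by (simp add: SS_def Pn_def nsq_def)
  also have "\<dots> = infsum (nsq w) (G \<times> UNIV)" by (rule infsum_Sigma_banach[OF sG])
  also have "\<dots> \<le> infsum (nsq w) UNIV" by (rule infsum_mono_neutral[OF sG s]) auto
  finally show ?thesis by (simp add: SS_def)
qed

lemma dsum_inf_eq: assumes "w \<in> l2 UNIV"
  shows "dsum \<infinity> x i w = (\<lambda>(n,k). x n i (Pn n w) k)"
  using assms by (auto simp: dsum_def Jset_inf Pn_def fun_eq_iff)

lemma dsum_inf_l2:
  fixes x :: "nat \<Rightarrow> nat tup"
  assumes xb: "\<And>n. x n \<in> BT m UNIV" and C: "\<And>n. tnorm m UNIV (x n) \<le> C" and w: "w \<in> l2 UNIV"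
  shows "dsum \<infinity> x i w \<in> l2 UNIV"
proof (cases "i < m")
  case False
  then have "dsum \<infinity> x i w = (\<lambda>_. 0)" using BT_hi[OF xb] w by (simp add: dsum_inf_eq fun_eq_iff)
  then show ?thesis by simp
next
  case True
  let ?q = "(\<lambda>(n,k). x n i (Pn n w) k)"
  have C0: "0 \<le> C" using C[of 0] tnorm_nonneg[of m UNIV "x 0"] by linarith
  have pl: "Pn n w \<in> l2 UNIV" for n using Pn_l2 w by blast
  have bn: "SS (x n i (Pn n w)) \<le> C^2 * SS (Pn n w)" for n
  proof -
    have "l2norm (x n i (Pn n w)) \<le> C * l2norm (Pn n w)"
      using tnorm_bound[OF xb True pl] C[of n] l2norm_nonneg[of "Pn n w"] by (meson mult_right_mono order_trans)
    then have "(l2norm (x n i (Pn n w)))^2 \<le> (C * l2norm (Pn n w))^2" by (rule power_mono) (simp add: l2norm_nonneg)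
    then show ?thesis by (simp add: SS_l2norm power_mult_distrib)
  qed
  have "sum (nsq ?q) F \<le> C^2 * SS w" if F: "finite F" for F
  proof -
    let ?G = "fst ` F" and ?K = "snd ` F"
    have "sum (nsq ?q) F \<le> sum (nsq ?q) (?G \<times> ?K)"
      by (rule sum_mono2) (use F in \<open>auto simp: nsq_def intro: rev_image_eqI\<close>)
    also have "\<dots> = (\<Sum>n\<in>?G. \<Sum>k\<in>?K. nsq (x n i (Pn n w)) k)"
      by (simp add: sum.cartesian_product nsq_def split_def)
    also have "\<dots> \<le> (\<Sum>n\<in>?G. SS (x n i (Pn n w)))"
      by (rule sum_mono) (rule sum_le_SS[OF l2_summ[OF BT_l2[OF xb pl]]], use F in auto)
    also have "\<dots> \<le> (\<Sum>n\<in>?G. C^2 * SS (Pn n w))" by (rule sum_mono[OF bn])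
    also have "\<dots> = C^2 * (\<Sum>n\<in>?G. SS (Pn n w))" by (simp add: sum_distrib_left)
    also have "\<dots> \<le> C^2 * SS w" by (rule mult_left_mono[OF sum_SS_Pn[OF l2_summ[OF w]]]) (use F in auto)
    finally show ?thesis .
  qed
  then have "nsq ?q summable_on UNIV" using SS_le_fin by blast
  then show ?thesis using w by (simp add: dsum_inf_eq l2_iff)
qed

lemma conj_lower:
  assumes a: "a \<in> BT m UNIV" and b: "b \<in> BT m UNIV" and ip: "inv_pair UNIV J2 s ts"
    and cs: "\<And>v. v \<in> l2 UNIV \<Longrightarrow> l2norm (s v) \<le> l2norm v"
    and ct: "\<And>w. w \<in> l2 J2 \<Longrightarrow> l2norm (ts w) \<le> l2norm w"
    and Z: "conj ts (dsum 2 (pair2 a b)) s \<in> BT m UNIV"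
  shows "tnorm m UNIV a \<le> tnorm m UNIV (conj ts (dsum 2 (pair2 a b)) s)"
    "tnorm m UNIV b \<le> tnorm m UNIV (conj ts (dsum 2 (pair2 a b)) s)"
proof -
  let ?Z = "conj ts (dsum 2 (pair2 a b)) s"
  have sb: "s \<in> bop UNIV J2" "ts \<in> bop J2 UNIV" using ip by (auto simp: inv_pair_def)
  have key: "l2norm (dsum 2 (pair2 a b) i w) \<le> tnorm m UNIV ?Z * l2norm w" if i: "i < m" and w: "w \<in> l2 J2" for i w
  proof -
    have tw: "ts w \<in> l2 UNIV" by (rule bop_l2[OF sb(2) w])
    have "dsum 2 (pair2 a b) i w = s (?Z i (ts w))"
      using ip w dsum2_l2[OF a b w, of i] by (simp add: conj_def inv_pair_def)
    then have "l2norm (dsum 2 (pair2 a b) i w) = l2norm (s (?Z i (ts w)))" by simp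
    moreover have "l2norm (s (?Z i (ts w))) \<le> l2norm (?Z i (ts w))" by (rule cs[OF BT_l2[OF Z tw]])
    moreover have "l2norm (?Z i (ts w)) \<le> tnorm m UNIV ?Z * l2norm (ts w)" by (rule tnorm_bound[OF Z i tw])
    moreover have "tnorm m UNIV ?Z * l2norm (ts w) \<le> tnorm m UNIV ?Z * l2norm w"
      by (rule mult_left_mono[OF ct[OF w] tnorm_nonneg])
    ultimately show ?thesis by linarith
  qed
  have z0: "a i (\<lambda>_. 0) = (\<lambda>_. 0)" "b i (\<lambda>_. 0) = (\<lambda>_. 0)" for i
    using a b by (cases "i < m"; auto simp: BT_def bop_zero)+
  show "tnorm m UNIV a \<le> tnorm m UNIV ?Z"
  proof (rule tnorm_le2[OF tnorm_nonneg])
    fix i v assume i: "i < m" and v: "(v::nat vec) \<in> l2 UNIV"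
    have w: "blk v (\<lambda>_. 0) \<in> l2 J2" by (rule blk0_l2(1)[OF v])
    have "dsum 2 (pair2 a b) i (blk v (\<lambda>_. 0)) = blk (a i v) (\<lambda>_. 0)" using w z0 by (simp add: dsum2_eq)
    moreover have "l2norm (blk (a i v) (\<lambda>_. 0)) = l2norm (a i v)" "l2norm (blk v (\<lambda>_. 0)) = l2norm v"
      using SS_blk[OF BT_l2[OF a v] l2_zero] SS_blk[OF v l2_zero] by (simp_all add: l2norm_SS)
    ultimately show "l2norm (a i v) \<le> tnorm m UNIV ?Z * l2norm v" using key[OF i w] by simp
  qed
  show "tnorm m UNIV b \<le> tnorm m UNIV ?Z"
  proof (rule tnorm_le2[OF tnorm_nonneg])
    fix i v assume i: "i < m" and v: "(v::nat vec) \<in> l2 UNIV"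
    have w: "blk (\<lambda>_. 0) v \<in> l2 J2" by (rule blk1_l2(1)[OF v])
    have "dsum 2 (pair2 a b) i (blk (\<lambda>_. 0) v) = blk (\<lambda>_. 0) (b i v)" using w z0 by (simp add: dsum2_eq)
    moreover have "l2norm (blk (\<lambda>_. 0) (b i v)) = l2norm (b i v)" "l2norm (blk (\<lambda>_. 0) v) = l2norm v"
      using SS_blk[OF l2_zero BT_l2[OF b v]] SS_blk[OF l2_zero v] by (simp_all add: l2norm_SS)
    ultimately show "l2norm (b i v) \<le> tnorm m UNIV ?Z * l2norm v" using key[OF i w] by simp
  qed
qed

definition Psi :: "((nat\<times>nat) vec \<Rightarrow> nat vec) \<Rightarrow> (nat\<times>nat) vec \<Rightarrow> (nat\<times>nat) vec" where
  "Psi tp w = (if w \<in> l2 UNIV then blk (Pn 0 w) (tp (shift w)) else (\<lambda>_. 0))"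
definition Phi :: "(nat vec \<Rightarrow> (nat\<times>nat) vec) \<Rightarrow> (nat\<times>nat) vec \<Rightarrow> (nat\<times>nat) vec" where
  "Phi up q = (if q \<in> l2 J2 then unshift (Pn 0 q) (up (Pn (Suc 0) q)) else (\<lambda>_. 0))"

lemma shift_lin: "shift (\<lambda>i. a * u i + b * v i) = (\<lambda>j. a * shift u j + b * shift v j)" by (auto simp: shift_def)
lemma unshift_lin: "unshift (\<lambda>i. a * u i + b * v i) (\<lambda>i. a * u' i + b * v' i) = (\<lambda>j. a * unshift u u' j + b * unshift v v' j)"
  by (auto simp: unshift_def)

lemma SS_eq: "l2norm a = l2norm b \<Longrightarrow> SS a = SS b" by (simp add: SS_l2norm)

lemma PsiPhi:
  assumes U: "unitary_pair (UNIV::nat set) (UNIV::(nat\<times>nat) set) up tp"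
  shows "inv_pair UNIV J2 (Psi tp) (Phi up)"
    "\<And>w. w \<in> l2 UNIV \<Longrightarrow> l2norm (Psi tp w) = l2norm w"
    "\<And>q. q \<in> l2 J2 \<Longrightarrow> l2norm (Phi up q) = l2norm q"
proof -
  have ub: "up \<in> bop UNIV UNIV" "tp \<in> bop UNIV UNIV" using U by (auto simp: unitary_pair_def inv_pair_def)
  have tu: "\<And>v. v \<in> l2 UNIV \<Longrightarrow> tp (up v) = v" "\<And>w. w \<in> l2 UNIV \<Longrightarrow> up (tp w) = w"
    using U by (auto simp: unitary_pair_def inv_pair_def)
  have nu: "\<And>v. v \<in> l2 UNIV \<Longrightarrow> l2norm (up v) = l2norm v" "\<And>w. w \<in> l2 UNIV \<Longrightarrow> l2norm (tp w) = l2norm w"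
    using unitary_norm1[OF U] unitary_norm2[OF U] by auto
  have Fl: "blk (Pn 0 w) (tp (shift w)) \<in> l2 J2" if "w \<in> l2 UNIV" for w
    by (rule blk_l2(1)[OF Pn_l2(1)[OF that] bop_l2[OF ub(2) shift_l2[OF that]]])
  have Fn: "l2norm (blk (Pn 0 w) (tp (shift w))) = l2norm w" if w: "w \<in> l2 UNIV" for w
  proof -
    have "SS (blk (Pn 0 w) (tp (shift w))) = SS (Pn 0 w) + SS (tp (shift w))"
      by (rule SS_blk[OF Pn_l2(1)[OF w] bop_l2[OF ub(2) shift_l2[OF w]]])
    also have "SS (tp (shift w)) = SS (shift w)" by (rule SS_eq[OF nu(2)[OF shift_l2[OF w]]])
    finally show ?thesis using SS_shift_split[OF w] by (simp add: l2norm_SS)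
  qed
  have Gl: "unshift (Pn 0 q) (up (Pn (Suc 0) q)) \<in> l2 UNIV" if "q \<in> l2 J2" for q
    by (rule unshift_l2[OF Pn_l2(1)[OF that] bop_l2[OF ub(1) Pn_l2(1)[OF that]]])
  have Gn: "l2norm (unshift (Pn 0 q) (up (Pn (Suc 0) q))) = l2norm q" if q: "q \<in> l2 J2" for q
  proof -
    have p: "Pn 0 q \<in> l2 UNIV" "Pn (Suc 0) q \<in> l2 UNIV" using Pn_l2 q by auto
    have "SS (unshift (Pn 0 q) (up (Pn (Suc 0) q))) = SS (Pn 0 q) + SS (up (Pn (Suc 0) q))"
      by (rule SS_unshift[OF p(1) bop_l2[OF ub(1) p(2)]])
    also have "SS (up (Pn (Suc 0) q)) = SS (Pn (Suc 0) q)" by (rule SS_eq[OF nu(1)[OF p(2)]])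
    also have "SS (Pn 0 q) + SS (Pn (Suc 0) q) = SS q" using SS_blk[OF p] l2_J2_eq'[OF q] by simp
    finally show ?thesis by (simp add: l2norm_SS)
  qed
  have Psib: "Psi tp \<in> bop UNIV J2"
  proof (rule bop_intro[where F="\<lambda>w. blk (Pn 0 w) (tp (shift w))" and C=1])
    fix u v :: "(nat\<times>nat) vec" and a b assume u: "u \<in> l2 UNIV" and v: "v \<in> l2 UNIV"
    show "blk (Pn 0 (\<lambda>i. a * u i + b * v i)) (tp (shift (\<lambda>i. a * u i + b * v i))) =
      (\<lambda>j. a * blk (Pn 0 u) (tp (shift u)) j + b * blk (Pn 0 v) (tp (shift v)) j)"
      unfolding shift_lin bop_lin[OF ub(2) shift_l2[OF u] shift_l2[OF v]] Pn_lin blk_lin ..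
  qed (auto simp: Psi_def Fl Fn)
  have Phib: "Phi up \<in> bop J2 UNIV"
  proof (rule bop_intro[where F="\<lambda>q. unshift (Pn 0 q) (up (Pn (Suc 0) q))" and C=1])
    fix u v :: "(nat\<times>nat) vec" and a b assume u: "u \<in> l2 J2" and v: "v \<in> l2 J2"
    show "unshift (Pn 0 (\<lambda>i. a * u i + b * v i)) (up (Pn (Suc 0) (\<lambda>i. a * u i + b * v i))) =
      (\<lambda>j. a * unshift (Pn 0 u) (up (Pn (Suc 0) u)) j + b * unshift (Pn 0 v) (up (Pn (Suc 0) v)) j)"
      unfolding Pn_lin bop_lin[OF ub(1) Pn_l2(1)[OF u] Pn_l2(1)[OF v]] unshift_lin ..
  qed (auto simp: Phi_def Gl Gn)
  have i1: "Phi up (Psi tp w) = w" if w: "w \<in> l2 UNIV" for w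
    using w Fl[OF w] tu(2)[OF shift_l2[OF w]] by (simp add: Psi_def Phi_def unshift_shift)
  have i2: "Psi tp (Phi up q) = q" if q: "q \<in> l2 J2" for q
    using q Gl[OF q] tu(1)[OF Pn_l2(1)[OF q]] l2_J2_eq'[OF q] by (simp add: Psi_def Phi_def)
  show "inv_pair UNIV J2 (Psi tp) (Phi up)" unfolding inv_pair_def Jset_inf[symmetric]
    using Psib Phib i1 i2 by (simp add: Jset_inf)
  show "\<And>w. w \<in> l2 UNIV \<Longrightarrow> l2norm (Psi tp w) = l2norm w" using Fn by (simp add: Psi_def)
  show "\<And>q. q \<in> l2 J2 \<Longrightarrow> l2norm (Phi up q) = l2norm q" using Gn by (simp add: Phi_def)
qed

context ncl begin

lemma BND: "\<exists>M. \<forall>x\<in>\<Omega>s k. Nr (f x) \<le> M"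
proof (rule ccontr)
  assume "\<not> (\<exists>M. \<forall>x\<in>\<Omega>s k. Nr (f x) \<le> M)"
  then have "\<forall>n::nat. \<exists>x. x \<in> \<Omega>s k \<and> real n < Nr (f x)" by (meson not_le)
  then obtain z where z: "\<And>n. z n \<in> \<Omega>s k" "\<And>n. real n < Nr (f (z n))" by metis
  define tl where "tl m = (\<lambda>n. z (n + m))" for m
  have "\<forall>m. \<exists>u t. unitary_pair (UNIV :: H set) (Jset \<infinity>) u t \<and> conj t (dsum \<infinity> (tl m)) u \<in> \<Omega>s k"
  proof
    fix m show "\<exists>u t. unitary_pair (UNIV :: H set) (Jset \<infinity>) u t \<and> conj t (dsum \<infinity> (tl m)) u \<in> \<Omega>s k"
      by (rule dsums) (auto simp: tl_def z)
  qed
  then obtain U T where UT: "\<And>m. unitary_pair (UNIV :: H set) UNIV (U m) (T m)"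
      "\<And>m. conj (T m) (dsum \<infinity> (tl m)) (U m) \<in> \<Omega>s k" unfolding Jset_inf by metis
  define Y where "Y m = conj (T m) (dsum \<infinity> (tl m)) (U m)" for m
  have YO: "Y m \<in> \<Omega>" for m unfolding Y_def by (rule \<Omega>s_\<Omega>[OF UT(2)])
  have zO: "z m \<in> \<Omega>" for m using z(1) \<Omega>s_\<Omega> by blast
  obtain C where C: "\<forall>x\<in>\<Omega>s k. Nd x \<le> C" using bdd by blast
  have tlb: "tl m n \<in> BT d UNIV" "Nd (tl m n) \<le> C" for m n
    using z(1)[of "n+m"] C \<Omega>_BT[OF \<Omega>s_\<Omega>[OF z(1)[of "n+m"]]] by (auto simp: tl_def)
  have key: "Nr (f (z m)) \<le> Nr (f (Y m)) \<and> Nr (f (Y (Suc m))) \<le> Nr (f (Y m))" for m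
  proof -
    let ?u = "U m" and ?t = "T m" and ?up = "U (Suc m)" and ?tp = "T (Suc m)"
    let ?s = "Psi ?tp \<circ> ?u" and ?ts = "?t \<circ> Phi ?up"
    have ipu: "inv_pair UNIV UNIV ?u ?t" using UT(1) by (simp add: unitary_pair_def)
    have ub: "?u \<in> bop UNIV UNIV" using ipu by (simp add: inv_pair_def)
    have pb: "Phi ?up \<in> bop J2 UNIV" "Psi ?tp \<in> bop UNIV J2"
      using PsiPhi(1)[OF UT(1)[of "Suc m"]] by (simp_all add: inv_pair_def)
    have ip: "inv_pair UNIV J2 ?s ?ts" by (rule inv_pair_comp[OF ipu PsiPhi(1)[OF UT(1)]])
    have cs: "l2norm (?s v) \<le> l2norm v" if "v \<in> l2 UNIV" for v
    proof -
      have "?u v \<in> l2 UNIV" by (rule bop_l2[OF ub that])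
      then show ?thesis using PsiPhi(2)[OF UT(1)[of "Suc m"]] unitary_norm1[OF UT(1)[of m] that] by simp
    qed
    have ct: "l2norm (?ts q) \<le> l2norm q" if "q \<in> l2 J2" for q
    proof -
      have "Phi ?up q \<in> l2 UNIV" by (rule bop_l2[OF pb(1) that])
      then show ?thesis using unitary_norm2[OF UT(1)[of m]] PsiPhi(3)[OF UT(1)[of "Suc m"] that] by simp
    qed
    have upb: "?up \<in> bop UNIV UNIV" "?tp \<in> bop UNIV UNIV" using UT(1) by (auto simp: unitary_pair_def inv_pair_def)
    have tpup: "?up (?tp w) = w" if "w \<in> l2 UNIV" for w using UT(1)[of "Suc m"] that by (simp add: unitary_pair_def inv_pair_def)
    have pt: "Phi ?up (dsum 2 (pair2 (z m) (Y (Suc m))) i (Psi ?tp w)) = dsum \<infinity> (tl m) i w"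
      if w: "w \<in> l2 UNIV" for i w
    proof -
      have sw: "shift w \<in> l2 UNIV" by (rule shift_l2[OF w])
      have q: "Psi ?tp w \<in> l2 J2" by (rule bop_l2[OF pb(2) w])
      have Dl: "dsum \<infinity> (tl (Suc m)) i (shift w) \<in> l2 UNIV" by (rule dsum_inf_l2[OF tlb sw])
      have y: "Y (Suc m) i (?tp (shift w)) = ?tp (dsum \<infinity> (tl (Suc m)) i (shift w))"
        using tpup[OF sw] by (simp add: Y_def conj_def)
      have e: "dsum 2 (pair2 (z m) (Y (Suc m))) i (Psi ?tp w) = blk (z m i (Pn 0 w)) (?tp (dsum \<infinity> (tl (Suc m)) i (shift w)))"
        using q w y by (simp add: dsum2_eq Psi_def)
      have el: "blk (z m i (Pn 0 w)) (?tp (dsum \<infinity> (tl (Suc m)) i (shift w))) \<in> l2 J2"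
        by (rule blk_l2(1)[OF BT_l2[OF \<Omega>_BT[OF zO] Pn_l2(1)[OF w]] bop_l2[OF upb(2) Dl]])
      have "Phi ?up (dsum 2 (pair2 (z m) (Y (Suc m))) i (Psi ?tp w)) = unshift (z m i (Pn 0 w)) (dsum \<infinity> (tl (Suc m)) i (shift w))"
        unfolding e using el tpup[OF Dl] by (simp add: Phi_def)
      also have "\<dots> = dsum \<infinity> (tl m) i w"
      proof (rule ext)
        fix j :: "nat\<times>nat" obtain n k' where j: "j = (n, k')" by (cases j)
        have "Pn (n - 1) (shift w) = Pn n w" if "n \<noteq> 0" using that by (auto simp: Pn_def shift_def)
        moreover have "n - 1 + Suc m = n + m" if "n \<noteq> 0" using that by simp
        ultimately show "unshift (z m i (Pn 0 w)) (dsum \<infinity> (tl (Suc m)) i (shift w)) j = dsum \<infinity> (tl m) i w j"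
          unfolding j using w sw by (auto simp: unshift_def dsum_inf_eq tl_def)
      qed
      finally show ?thesis .
    qed
    have Yeq: "Y m = conj ?ts (dsum 2 (pair2 (z m) (Y (Suc m)))) ?s"
    proof (rule ext, rule ext)
      fix i and v :: "nat vec"
      have uv: "?u v \<in> l2 UNIV" using bop_l2[OF ub, of v] bop_off[OF ub, of v] by (cases "v \<in> l2 UNIV") auto
      show "Y m i v = conj ?ts (dsum 2 (pair2 (z m) (Y (Suc m)))) ?s i v"
        using pt[OF uv, of i] by (simp add: Y_def conj_def)
    qed
    have fY: "f (Y m) = conj ?ts (dsum 2 (pair2 (f (z m)) (f (Y (Suc m))))) ?s"
      using fnc[OF zO YO ip] YO[of m] Yeq by simp
    have Zb: "conj ?ts (dsum 2 (pair2 (f (z m)) (f (Y (Suc m))))) ?s \<in> BT r UNIV"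
      using fBT[OF YO[of m]] unfolding fY .
    show ?thesis
      using conj_lower[OF fBT[OF zO[of m]] fBT[OF YO[of "Suc m"]] ip cs ct Zb] unfolding fY[symmetric] by simp
  qed
  have mono: "Nr (f (Y m)) \<le> Nr (f (Y 0))" for m
    by (induction m) (use key in \<open>auto intro: order_trans\<close>)
  define m where "m = nat \<lceil>Nr (f (Y 0))\<rceil>"
  have "Nr (f (Y 0)) \<le> real m" unfolding m_def by linarith
  moreover have "real m < Nr (f (z m))" by (rule z(2))
  ultimately show False using key[of m] mono[of m] by linarith
qed

end

lemma tsub_self: "tsub a a = tz" by (simp add: tsub_def tz_def)
lemma tsub_tz: "tsub a tz = a" by (simp add: tsub_def tz_def)

context ncl begin

lemma LIP: assumes p: "p \<in> \<Omega>s k"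
  shows "\<exists>\<rho>>0. \<exists>L\<ge>0. (\<forall>y\<in>BT d UNIV. Nd (tsub y p) < \<rho> \<longrightarrow> y \<in> \<Omega>) \<and>
     (\<forall>y\<in>BT d UNIV. \<forall>y'\<in>BT d UNIV. Nd (tsub y p) < \<rho> \<longrightarrow> Nd (tsub y' p) < \<rho> \<longrightarrow>
        Nr (tsub (f y) (f y')) \<le> L * Nd (tsub y y'))"
proof -
  obtain \<epsilon>1 where e1: "\<epsilon>1 > 0" "\<And>y. y \<in> BT d UNIV \<Longrightarrow> Nd (tsub y p) < \<epsilon>1 \<Longrightarrow> y \<in> \<Omega>s (Suc k)"
    using int[OF p] by blast
  have Z0: "Ttri p p tz \<in> \<Omega>s k" by (rule DIAG[OF p])
  obtain \<epsilon>2 where e2: "\<epsilon>2 > 0" "\<And>y. y \<in> BT d UNIV \<Longrightarrow> Nd (tsub y (Ttri p p tz)) < \<epsilon>2 \<Longrightarrow> y \<in> \<Omega>s (Suc k)"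
    using int[OF Z0] by blast
  obtain M where M: "\<And>x. x \<in> \<Omega>s (Suc k) \<Longrightarrow> Nr (f x) \<le> M" using BND by blast
  have pb: "p \<in> BT d UNIV" by (rule \<Omega>_BT[OF \<Omega>s_\<Omega>[OF p]])
  have M0: "0 \<le> M" using M[OF \<Omega>s_Suc[OF p]] tnorm_nonneg[of r UNIV "f p"] by linarith
  define \<rho> where "\<rho> = min \<epsilon>1 (\<epsilon>2 / 3)"
  define L where "L = 3 * M / \<epsilon>2"
  have \<rho>: "\<rho> > 0" using e1 e2 by (simp add: \<rho>_def)
  have L0: "L \<ge> 0" using M0 e2 by (simp add: L_def)
  have ball: "y \<in> \<Omega>s (Suc k)" if "y \<in> BT d UNIV" "Nd (tsub y p) < \<rho>" for y
    using e1(2)[OF that(1)] that(2) by (simp add: \<rho>_def)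
  have lip: "Nr (tsub (f y) (f y')) \<le> L * Nd (tsub y y')"
    if y: "y \<in> BT d UNIV" and y': "y' \<in> BT d UNIV" and dy: "Nd (tsub y p) < \<rho>" and dy': "Nd (tsub y' p) < \<rho>" for y y'
  proof (cases "Nd (tsub y y') = 0")
    case True
    then have "y = y'" by (rule tsub_eq0[OF y y'])
    then show ?thesis by (simp add: tsub_self)
  next
    case False
    define \<delta> where "\<delta> = Nd (tsub y y')"
    have \<delta>: "\<delta> > 0" using False tnorm_nonneg[of d UNIV "tsub y y'"] by (simp add: \<delta>_def)
    define c where "c = complex_of_real (\<epsilon>2 / (3 * \<delta>))"
    have "0 \<le> \<epsilon>2 / (3 * \<delta>)" using e2 \<delta> by simp
    then have cn: "cmod c = \<epsilon>2 / (3 * \<delta>)" unfolding c_def by (simp only: norm_of_real abs_of_nonneg)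
    let ?h = "tscale c (tsub y y')"
    have hb: "?h \<in> BT d UNIV" by (rule tscale_BT[OF tsub_BT[OF y y']])
    have hn: "Nd ?h = \<epsilon>2 / 3" using tnorm_scale[OF tsub_BT[OF y y'], of c] cn \<delta> by (simp add: \<delta>_def)
    let ?T = "Ttri y y' ?h"
    have Tb: "?T \<in> BT d UNIV" by (rule Ttri_BT[OF y y' hb])
    have "Nd (tsub ?T (Ttri p p tz)) = Nd (Ttri (tsub y p) (tsub y' p) (tsub ?h tz))"
      by (simp add: Ttri_sub[OF y y' hb pb pb tz_BT])
    also have "\<dots> \<le> Nd (tsub y p) + Nd (tsub y' p) + Nd ?h"
      using Ttri_norm[OF tsub_BT[OF y pb] tsub_BT[OF y' pb] tsub_BT[OF hb tz_BT]] by (simp add: tsub_tz)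
    also have "\<dots> < \<epsilon>2" using dy dy' hn by (simp add: \<rho>_def)
    finally have "?T \<in> \<Omega>s (Suc k)" using e2(2)[OF Tb] by blast
    then have T: "?T \<in> \<Omega>" "Nr (f ?T) \<le> M" using M \<Omega>s_\<Omega> by auto
    have yO: "y \<in> \<Omega>" "y' \<in> \<Omega>" using ball[OF y dy] ball[OF y' dy'] \<Omega>s_\<Omega> by auto
    have fT: "f ?T = Ttri (f y) (f y') (tscale c (tsub (f y) (f y')))" by (rule SIM[OF yO T(1)])
    have fb: "f y \<in> BT r UNIV" "f y' \<in> BT r UNIV" using fBT yO by auto
    have "B12 (f ?T) = tscale c (tsub (f y) (f y'))"
      unfolding fT by (rule B12_Ttri[OF fb tscale_BT[OF tsub_BT[OF fb]]])
    then have "Nr (tscale c (tsub (f y) (f y'))) \<le> M"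
      using B12_norm[OF fBT[OF T(1)]] T(2) by simp
    then have "cmod c * Nr (tsub (f y) (f y')) \<le> M" by (simp add: tnorm_scale[OF tsub_BT[OF fb]])
    then have "\<epsilon>2 / (3 * \<delta>) * Nr (tsub (f y) (f y')) \<le> M" by (simp add: cn)
    then have "Nr (tsub (f y) (f y')) \<le> M * (3 * \<delta>) / \<epsilon>2" using e2 \<delta> by (simp add: field_simps)
    then show ?thesis by (simp add: L_def \<delta>_def mult.commute mult.left_commute)
  qed
  show ?thesis using \<rho> L0 ball lip \<Omega>s_\<Omega> by blast
qed

end

lemma ZERO: fixes a K t0 :: real assumes "0 < t0" "\<And>t. 0 < t \<Longrightarrow> t < t0 \<Longrightarrow> a \<le> K * t" shows "a \<le> 0"
proof (rule ccontr)
  assume "\<not> a \<le> 0" then have a: "a > 0" by simp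
  define t where "t = min (t0/2) (a / (2 * (\<bar>K\<bar> + 1)))"
  have t: "0 < t" "t < t0" using a assms(1) by (auto simp: t_def)
  have "K * t \<le> \<bar>K\<bar> * t" using t by (simp add: mult_right_mono)
  also have "\<dots> \<le> \<bar>K\<bar> * (a / (2 * (\<bar>K\<bar> + 1)))" by (rule mult_left_mono) (auto simp: t_def)
  also have "\<dots> < a" using a by (simp add: field_simps) (smt (verit) mult_nonneg_nonneg)
  finally show False using assms(2)[OF t] by linarith
qed

lemma tscale_tz[simp]: "tscale c tz = tz" by (simp add: tscale_def tz_def)
lemma tscale_0[simp]: "tscale 0 h = tz" by (simp add: tscale_def tz_def)
lemma tadd_tz[simp]: "tadd x tz = x" by (simp add: tadd_def tz_def)

locale ncx = ncl +
  fixes x :: "H tup" and \<rho> L ex :: real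
  assumes xO: "x \<in> \<Omega>" and \<rho>: "\<rho> > 0" and L0: "L \<ge> 0" and ex: "ex > 0"
    and ballz: "\<And>y. y \<in> BT d UNIV \<Longrightarrow> Nd (tsub y (Ttri x x tz)) < \<rho> \<Longrightarrow> y \<in> \<Omega>"
    and lipz: "\<And>y y'. y \<in> BT d UNIV \<Longrightarrow> y' \<in> BT d UNIV \<Longrightarrow> Nd (tsub y (Ttri x x tz)) < \<rho> \<Longrightarrow>
          Nd (tsub y' (Ttri x x tz)) < \<rho> \<Longrightarrow> Nr (tsub (f y) (f y')) \<le> L * Nd (tsub y y')"
    and ballx: "\<And>y. y \<in> BT d UNIV \<Longrightarrow> Nd (tsub y x) < ex \<Longrightarrow> y \<in> \<Omega>"
begin

lemma xb: "x \<in> BT d UNIV" by (rule \<Omega>_BT[OF xO])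

definition G :: "H tup \<Rightarrow> H tup" where "G w = B12 (f (Ttri x x w))"

lemma Tx_near: assumes "w \<in> BT d UNIV" shows "Nd (tsub (Ttri x x w) (Ttri x x tz)) \<le> Nd w"
  using Ttri_norm[OF tsub_BT[OF xb xb] tsub_BT[OF xb xb] tsub_BT[OF assms tz_BT]]
  by (simp add: Ttri_sub[OF xb xb assms xb xb tz_BT] tsub_self tsub_tz)

lemma TxO: assumes "w \<in> BT d UNIV" "Nd w < \<rho>" shows "Ttri x x w \<in> \<Omega>"
  using ballz[OF Ttri_BT[OF xb xb assms(1)]] Tx_near[OF assms(1)] assms(2) by simp

lemma G_BT: assumes "w \<in> BT d UNIV" "Nd w < \<rho>" shows "G w \<in> BT r UNIV"
  unfolding G_def by (rule B12_BT[OF fBT[OF TxO[OF assms]]])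

lemma STAR:
  assumes y: "y \<in> \<Omega>" and y': "y' \<in> \<Omega>" and dy: "Nd (tsub y x) < \<rho>/3" and dy': "Nd (tsub y' x) < \<rho>/3"
    and w: "Nd (tscale c (tsub y y')) < \<rho>/3"
  shows "Nr (tsub (tscale c (tsub (f y) (f y'))) (G (tscale c (tsub y y')))) \<le> L * (Nd (tsub y x) + Nd (tsub y' x))"
proof -
  have yb: "y \<in> BT d UNIV" "y' \<in> BT d UNIV" using \<Omega>_BT y y' by auto
  let ?h = "tscale c (tsub y y')"
  have hb: "?h \<in> BT d UNIV" by (rule tscale_BT[OF tsub_BT[OF yb]])
  let ?T1 = "Ttri y y' ?h" and ?T2 = "Ttri x x ?h"
  have T1b: "?T1 \<in> BT d UNIV" by (rule Ttri_BT[OF yb hb])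
  have T2b: "?T2 \<in> BT d UNIV" by (rule Ttri_BT[OF xb xb hb])
  have n1: "Nd (tsub ?T1 (Ttri x x tz)) < \<rho>"
  proof -
    have "Nd (tsub ?T1 (Ttri x x tz)) \<le> Nd (tsub y x) + Nd (tsub y' x) + Nd ?h"
      using Ttri_norm[OF tsub_BT[OF yb(1) xb] tsub_BT[OF yb(2) xb] tsub_BT[OF hb tz_BT]]
      by (simp add: Ttri_sub[OF yb hb xb xb tz_BT] tsub_tz)
    then show ?thesis using dy dy' w by linarith
  qed
  have n2: "Nd (tsub ?T2 (Ttri x x tz)) < \<rho>" using Tx_near[OF hb] w \<rho> by linarith
  have T1O: "?T1 \<in> \<Omega>" by (rule ballz[OF T1b n1])
  have fT1: "f ?T1 = Ttri (f y) (f y') (tscale c (tsub (f y) (f y')))" by (rule SIM[OF y y' T1O])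
  have fb: "f y \<in> BT r UNIV" "f y' \<in> BT r UNIV" using fBT y y' by auto
  have B1: "B12 (f ?T1) = tscale c (tsub (f y) (f y'))"
    unfolding fT1 by (rule B12_Ttri[OF fb tscale_BT[OF tsub_BT[OF fb]]])
  have fT12: "f ?T1 \<in> BT r UNIV" "f ?T2 \<in> BT r UNIV" using fBT[OF T1O] fBT[OF TxO[OF hb]] w \<rho> by auto
  have "Nr (tsub (tscale c (tsub (f y) (f y'))) (G ?h)) = Nr (B12 (tsub (f ?T1) (f ?T2)))"
    unfolding G_def B1[symmetric] B12_sub[OF fT12] ..
  also have "\<dots> \<le> Nr (tsub (f ?T1) (f ?T2))" by (rule B12_norm[OF tsub_BT[OF fT12]])
  also have "\<dots> \<le> L * Nd (tsub ?T1 ?T2)" by (rule lipz[OF T1b T2b n1 n2])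
  also have "Nd (tsub ?T1 ?T2) \<le> Nd (tsub y x) + Nd (tsub y' x)"
    using Ttri_norm[OF tsub_BT[OF yb(1) xb] tsub_BT[OF yb(2) xb] tsub_BT[OF hb hb]]
    by (simp add: Ttri_sub[OF yb hb xb xb hb] tsub_self)
  finally show ?thesis using L0 by (simp add: mult_left_mono)
qed

lemma QB:
  assumes h: "h \<in> BT d UNIV" and c: "c \<noteq> 0" "Nd (tscale c h) < \<rho>/3"
    and t: "t \<noteq> 0" "Nd (tscale t h) < \<rho>/3" and yO: "tadd x (tscale t h) \<in> \<Omega>"
  shows "Nr (tsub (tscale (1/t) (tsub (f (tadd x (tscale t h))) (f x))) (tscale (1/c) (G (tscale c h))))
     \<le> L * cmod t * Nd h / cmod c"
proof -
  let ?y = "tadd x (tscale t h)"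
  have e1: "tscale (- c / t) (tsub x ?y) = tscale c h" using t by (auto simp: tscale_def tsub_def tadd_def fun_eq_iff)
  have e2: "tsub ?y x = tscale t h" by (auto simp: tscale_def tsub_def tadd_def fun_eq_iff)
  have e3: "tsub x x = tz" by (rule tsub_self)
  have S: "Nr (tsub (tscale (- c / t) (tsub (f x) (f ?y))) (G (tscale c h))) \<le> L * (0 + Nd (tscale t h))"
    using STAR[OF xO yO, of "-c/t"] e1 e2 e3 c t \<rho> by simp
  have fb: "f x \<in> BT r UNIV" "f ?y \<in> BT r UNIV" using fBT xO yO by auto
  have Gb: "G (tscale c h) \<in> BT r UNIV" using G_BT[OF tscale_BT[OF h]] c \<rho> by simp
  have e4: "tsub (tscale (1/t) (tsub (f ?y) (f x))) (tscale (1/c) (G (tscale c h))) =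
      tscale (1/c) (tsub (tscale (- c / t) (tsub (f x) (f ?y))) (G (tscale c h)))"
    using c t by (auto simp: tscale_def tsub_def fun_eq_iff field_simps)
  have "Nr (tsub (tscale (1/t) (tsub (f ?y) (f x))) (tscale (1/c) (G (tscale c h))))
     = cmod (1/c) * Nr (tsub (tscale (- c / t) (tsub (f x) (f ?y))) (G (tscale c h)))"
    unfolding e4 by (rule tnorm_scale[OF tsub_BT[OF tscale_BT[OF tsub_BT[OF fb]] Gb]])
  also have "\<dots> \<le> cmod (1/c) * (L * (cmod t * Nd h))"
    using S tnorm_scale[OF h, of t] by (simp add: mult_left_mono)
  finally show ?thesis by (simp add: norm_divide)
qed

end

context ncx begin

definition R :: "H tup \<Rightarrow> real" where "R h = \<rho> / (4 * (Nd h + 1))"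
definition D :: "H tup \<Rightarrow> H tup" where "D h = tscale (1 / complex_of_real (R h)) (G (tscale (complex_of_real (R h)) h))"

lemma R_pos: "R h > 0" using \<rho> tnorm_nonneg[of d UNIV h] by (simp add: R_def)

lemma R_small: assumes "h \<in> BT d UNIV" shows "Nd (tscale (complex_of_real (R h)) h) < \<rho>/3"
proof -
  have n: "Nd (tscale (complex_of_real (R h)) h) = R h * Nd h"
    using tnorm_scale[OF assms, of "complex_of_real (R h)"] R_pos[of h] by simp
  have "R h * Nd h = \<rho> / 4 * (Nd h / (Nd h + 1))" by (simp add: R_def)
  also have "\<dots> \<le> \<rho> / 4 * 1" using \<rho> tnorm_nonneg[of d UNIV h] by (intro mult_left_mono) auto
  finally show ?thesis using n \<rho> by simp
qed

lemma D_BT: assumes "h \<in> BT d UNIV" shows "D h \<in> BT r UNIV"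
  unfolding D_def using G_BT[OF tscale_BT[OF assms]] R_small[OF assms] \<rho> by (intro tscale_BT) simp

lemma GAT: assumes h: "h \<in> BT d UNIV"
  shows "\<forall>\<epsilon>>0. \<exists>\<delta>>0. \<forall>t::complex. t \<noteq> 0 \<and> cmod t < \<delta> \<and> tadd x (tscale t h) \<in> \<Omega> \<longrightarrow>
            Nr (tsub (tscale (1 / t) (tsub (f (tadd x (tscale t h))) (f x))) (D h)) < \<epsilon>"
proof (intro allI impI)
  fix \<epsilon> :: real assume \<epsilon>: "\<epsilon> > 0"
  have n0: "0 \<le> Nd h" by (rule tnorm_nonneg)
  define \<delta> where "\<delta> = min (\<rho> / (3 * (Nd h + 1))) (\<epsilon> * R h / (L * Nd h + 1))"
  have p1: "0 < L * Nd h + 1" using mult_nonneg_nonneg[OF L0 n0] by linarith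
  have \<delta>: "\<delta> > 0" using \<rho> \<epsilon> R_pos[of h] n0 p1 by (simp add: \<delta>_def)
  show "\<exists>\<delta>>0. \<forall>t::complex. t \<noteq> 0 \<and> cmod t < \<delta> \<and> tadd x (tscale t h) \<in> \<Omega> \<longrightarrow>
            Nr (tsub (tscale (1 / t) (tsub (f (tadd x (tscale t h))) (f x))) (D h)) < \<epsilon>"
  proof (intro exI[of _ \<delta>] conjI allI impI \<delta>)
    fix t :: complex assume t: "t \<noteq> 0 \<and> cmod t < \<delta> \<and> tadd x (tscale t h) \<in> \<Omega>"
    have tn: "Nd (tscale t h) = cmod t * Nd h" by (rule tnorm_scale[OF h])
    have "cmod t * Nd h \<le> cmod t * (Nd h + 1)" by (simp add: mult_left_mono)
    also have "\<dots> < \<rho> / (3 * (Nd h + 1)) * (Nd h + 1)" using t n0 by (intro mult_strict_right_mono) (auto simp: \<delta>_def)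
    also have "\<dots> = \<rho> / 3" using n0 by (simp add: field_simps)
    finally have t3: "Nd (tscale t h) < \<rho>/3" using tn by simp
    have Rc: "complex_of_real (R h) \<noteq> 0" using R_pos[of h] by simp
    have "Nr (tsub (tscale (1 / t) (tsub (f (tadd x (tscale t h))) (f x))) (D h)) \<le> L * cmod t * Nd h / cmod (complex_of_real (R h))"
      unfolding D_def by (rule QB[OF h Rc R_small[OF h] _ t3]) (use t in auto)
    also have "\<dots> = L * Nd h * cmod t / R h" using R_pos[of h] by simp
    also have "\<dots> < \<epsilon>"
    proof -
      have "L * Nd h * cmod t \<le> (L * Nd h + 1) * cmod t" by (simp add: mult_right_mono)
      also have "\<dots> < (L * Nd h + 1) * (\<epsilon> * R h / (L * Nd h + 1))"
        using t L0 n0 by (intro mult_strict_left_mono) (auto simp: \<delta>_def add_nonneg_pos)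
      also have "\<dots> = \<epsilon> * R h" using p1 by simp
      finally show ?thesis using R_pos[of h] by (simp add: divide_less_eq)
    qed
    finally show "Nr (tsub (tscale (1 / t) (tsub (f (tadd x (tscale t h))) (f x))) (D h)) < \<epsilon>" .
  qed
qed

lemma CONS: assumes h: "h \<in> BT d UNIV" and c: "c \<noteq> 0" "Nd (tscale c h) < \<rho>/3"
  shows "tscale (1/c) (G (tscale c h)) = D h"
proof -
  let ?A = "tscale (1/c) (G (tscale c h))"
  have Ab: "?A \<in> BT r UNIV" using G_BT[OF tscale_BT[OF h]] c \<rho> by (intro tscale_BT) simp
  have Bb: "D h \<in> BT r UNIV" by (rule D_BT[OF h])
  have n0: "0 \<le> Nd h" by (rule tnorm_nonneg)
  define t0 where "t0 = min (ex / (Nd h + 1)) (\<rho> / (3 * (Nd h + 1)))"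
  have t0: "t0 > 0" using ex \<rho> n0 by (simp add: t0_def)
  have "Nr (tsub ?A (D h)) \<le> (L * Nd h / cmod c + L * Nd h / R h) * t" if t: "0 < t" "t < t0" for t
  proof -
    let ?t = "complex_of_real t"
    let ?y = "tadd x (tscale ?t h)"
    have tn: "Nd (tscale ?t h) = t * Nd h" using tnorm_scale[OF h, of ?t] t by simp
    have a1: "t * Nd h < ex"
    proof -
      have "t * Nd h \<le> t * (Nd h + 1)" using t by simp
      also have "\<dots> < ex / (Nd h + 1) * (Nd h + 1)" using t n0 by (intro mult_strict_right_mono) (auto simp: t0_def)
      finally show ?thesis using n0 by simp
    qed
    have a2: "t * Nd h < \<rho> / 3"
    proof -
      have "t * Nd h \<le> t * (Nd h + 1)" using t by simp
      also have "\<dots> < \<rho> / (3 * (Nd h + 1)) * (Nd h + 1)" using t n0 by (intro mult_strict_right_mono) (auto simp: t0_def)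
      also have "\<rho> / (3 * (Nd h + 1)) * (Nd h + 1) = \<rho> / 3" using n0 by (simp add: field_simps)
      finally show ?thesis .
    qed
    have yb: "?y \<in> BT d UNIV" by (rule tadd_BT[OF xb tscale_BT[OF h]])
    have "tsub ?y x = tscale ?t h" by (auto simp: tsub_def tadd_def tscale_def fun_eq_iff)
    then have yO: "?y \<in> \<Omega>" using ballx[OF yb] a1 tn by simp
    have t0': "?t \<noteq> 0" using t by simp
    let ?q = "tscale (1 / ?t) (tsub (f ?y) (f x))"
    have qb: "?q \<in> BT r UNIV" using fBT[OF yO] fBT[OF xO] by (intro tscale_BT tsub_BT)
    have q1: "Nr (tsub ?q ?A) \<le> L * t * Nd h / cmod c"
      using QB[OF h c t0' _ yO] a2 tn t by simp
    have q2: "Nr (tsub ?q (D h)) \<le> L * t * Nd h / R h"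
      using QB[OF h _ R_small[OF h] t0' _ yO] a2 tn t R_pos[of h] unfolding D_def by simp
    have "Nr (tsub ?A (D h)) \<le> Nr (tsub ?A ?q) + Nr (tsub ?q (D h))" by (rule tsub_tsub_tri[OF Ab qb Bb])
    also have "\<dots> = Nr (tsub ?q ?A) + Nr (tsub ?q (D h))" using tsub_sym[OF Ab qb] by simp
    also have "\<dots> \<le> L * t * Nd h / cmod c + L * t * Nd h / R h" using q1 q2 by simp
    finally show ?thesis by (simp add: algebra_simps)
  qed
  then have "Nr (tsub ?A (D h)) \<le> 0" by (intro ZERO[OF t0]) auto
  then have "Nr (tsub ?A (D h)) = 0" using tnorm_nonneg[of r UNIV "tsub ?A (D h)"] by linarith
  then show ?thesis by (rule tsub_eq0[OF Ab Bb])
qed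

lemma z0O: "Ttri x x tz \<in> \<Omega>" using TxO[OF tz_BT] \<rho> by simp

lemma fz0: "f (Ttri x x tz) = Ttri (f x) (f x) tz"
  using SIM[OF xO xO, of 0] z0O by simp

lemma D_tz: "D tz = tz"
proof -
  have "G tz = tz" unfolding G_def fz0 by (rule B12_Ttri[OF fBT[OF xO] fBT[OF xO] tz_BT])
  then show ?thesis by (simp add: D_def)
qed

end

context ncx begin

lemma D_hom: assumes h: "h \<in> BT d UNIV" shows "D (tscale a h) = tscale a (D h)"
proof (cases "a = 0")
  case True then show ?thesis using D_tz by simp
next
  case False
  let ?h = "tscale a h"
  let ?R = "complex_of_real (R ?h)"
  have hb: "?h \<in> BT d UNIV" by (rule tscale_BT[OF h])
  have e: "tscale ?R ?h = tscale (?R * a) h" by (simp add: tscale_def mult.assoc)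
  have c: "?R * a \<noteq> 0" using False R_pos[of ?h] by simp
  have "tscale (1 / (?R * a)) (G (tscale (?R * a) h)) = D h"
    by (rule CONS[OF h c]) (use R_small[OF hb] e in simp)
  moreover have "D ?h = tscale a (tscale (1 / (?R * a)) (G (tscale (?R * a) h)))"
    unfolding D_def e using False R_pos[of ?h] by (auto simp: tscale_def fun_eq_iff)
  ultimately show ?thesis by simp
qed

lemma D_add: assumes h: "h \<in> BT d UNIV" and k: "k \<in> BT d UNIV" shows "D (tadd h k) = tadd (D h) (D k)"
proof -
  let ?s = "tadd h k"
  have sb: "?s \<in> BT d UNIV" by (rule tadd_BT[OF h k])
  define N1 where "N1 = Nd h + Nd ?s + 1"
  have N1: "N1 \<ge> 1" "Nd h \<le> N1" "Nd ?s \<le> N1" using tnorm_nonneg[of d UNIV h] tnorm_nonneg[of d UNIV ?s] by (auto simp: N1_def)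
  define t0 where "t0 = min (ex / N1) (\<rho> / (3 * N1))"
  have t0: "t0 > 0" using ex \<rho> N1 by (simp add: t0_def)
  have Db: "D h \<in> BT r UNIV" "D k \<in> BT r UNIV" "D ?s \<in> BT r UNIV" using D_BT h k sb by auto
  let ?E = "tsub (D ?s) (tadd (D h) (D k))"
  have Eb: "?E \<in> BT r UNIV" using Db by (intro tsub_BT tadd_BT)
  have "Nr ?E \<le> (L * Nd ?s / R ?s + L * Nd h / R h + L * (Nd h + Nd ?s) / R k) * t" if t: "0 < t" "t < t0" for t
  proof -
    let ?t = "complex_of_real t"
    have t0': "?t \<noteq> 0" using t by simp
    have small: "t * Nd w < ex" "t * Nd w < \<rho>/3" if "Nd w \<le> N1" for w
    proof -
      have "t * Nd w \<le> t * N1" using t that by (simp add: mult_left_mono)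
      also have "\<dots> < ex / N1 * N1" using t N1 by (intro mult_strict_right_mono) (auto simp: t0_def)
      finally show "t * Nd w < ex" using N1 by simp
      have "t * Nd w \<le> t * N1" using t that by (simp add: mult_left_mono)
      also have "\<dots> < \<rho> / (3 * N1) * N1" using t N1 by (intro mult_strict_right_mono) (auto simp: t0_def)
      also have "\<rho> / (3 * N1) * N1 = \<rho> / 3" using N1 by (simp add: field_simps)
      finally show "t * Nd w < \<rho>/3" .
    qed
    have tn: "Nd (tscale ?t w) = t * Nd w" if "w \<in> BT d UNIV" for w using tnorm_scale[OF that, of ?t] t by simp
    let ?y = "tadd x (tscale ?t h)" and ?y' = "tadd x (tscale ?t ?s)"
    have yb: "?y \<in> BT d UNIV" "?y' \<in> BT d UNIV" using xb h sb by (auto intro: tadd_BT tscale_BT)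
    have dy: "tsub ?y x = tscale ?t h" "tsub ?y' x = tscale ?t ?s" by (auto simp: tsub_def tadd_def tscale_def fun_eq_iff)
    have yO: "?y \<in> \<Omega>" "?y' \<in> \<Omega>"
      using ballx[OF yb(1)] ballx[OF yb(2)] dy tn[OF h] tn[OF sb] small(1)[OF N1(2)] small(1)[OF N1(3)] by auto
    have fb: "f x \<in> BT r UNIV" "f ?y \<in> BT r UNIV" "f ?y' \<in> BT r UNIV" using fBT xO yO by auto
    let ?q1 = "tscale (1 / ?t) (tsub (f ?y') (f x))" and ?q2 = "tscale (1 / ?t) (tsub (f ?y) (f x))"
    let ?q3 = "tscale (1 / ?t) (tsub (f ?y') (f ?y))"
    have a1: "Nr (tsub ?q1 (D ?s)) \<le> L * Nd ?s * t / R ?s"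
      using QB[OF sb _ R_small[OF sb] t0' _ yO(2)] tn[OF sb] small(2)[OF N1(3)] t R_pos[of ?s] unfolding D_def by (simp add: ac_simps)
    have a2: "Nr (tsub ?q2 (D h)) \<le> L * Nd h * t / R h"
      using QB[OF h _ R_small[OF h] t0' _ yO(1)] tn[OF h] small(2)[OF N1(2)] t R_pos[of h] unfolding D_def by (simp add: ac_simps)
    have a3: "Nr (tsub ?q3 (D k)) \<le> L * (Nd h + Nd ?s) * t / R k"
    proof -
      let ?Rk = "complex_of_real (R k)"
      let ?c = "- ?Rk / ?t"
      have e1: "tscale ?c (tsub ?y ?y') = tscale ?Rk k" using t by (auto simp: tsub_def tadd_def tscale_def fun_eq_iff field_simps)
      have S: "Nr (tsub (tscale ?c (tsub (f ?y) (f ?y'))) (G (tscale ?Rk k))) \<le> L * (t * Nd h + t * Nd ?s)"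
        using STAR[OF yO, of ?c] e1 dy tn[OF h] tn[OF sb] small(2)[OF N1(2)] small(2)[OF N1(3)] R_small[OF k] by simp
      have Gb: "G (tscale ?Rk k) \<in> BT r UNIV" using G_BT[OF tscale_BT[OF k]] R_small[OF k] \<rho> by simp
      have e2: "tsub ?q3 (D k) = tscale (1 / ?Rk) (tsub (tscale ?c (tsub (f ?y) (f ?y'))) (G (tscale ?Rk k)))"
        using t R_pos[of k] unfolding D_def by (auto simp: tsub_def tscale_def fun_eq_iff field_simps)
      have "Nr (tsub ?q3 (D k)) = (1 / R k) * Nr (tsub (tscale ?c (tsub (f ?y) (f ?y'))) (G (tscale ?Rk k)))"
        unfolding e2 using tnorm_scale[OF tsub_BT[OF tscale_BT[OF tsub_BT[OF fb(2,3)]] Gb], of "1/?Rk"] R_pos[of k]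
        by (simp add: norm_divide)
      also have "\<dots> \<le> (1 / R k) * (L * (t * Nd h + t * Nd ?s))" using S R_pos[of k] by (intro mult_left_mono) auto
      finally show ?thesis by (simp add: algebra_simps add_divide_distrib)
    qed
    have qb: "?q1 \<in> BT r UNIV" "?q2 \<in> BT r UNIV" "?q3 \<in> BT r UNIV" using fb by (auto intro: tscale_BT tsub_BT)
    have eq: "?E = tsub (tadd (tsub ?q2 (D h)) (tsub ?q3 (D k))) (tsub ?q1 (D ?s))"
      using t by (auto simp: tsub_def tadd_def tscale_def fun_eq_iff field_simps)
    have "Nr ?E \<le> Nr (tadd (tsub ?q2 (D h)) (tsub ?q3 (D k))) + Nr (tsub ?q1 (D ?s))"
      unfolding eq by (rule tnorm_sub) (use qb Db in \<open>auto intro: tsub_BT tadd_BT\<close>)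
    also have "\<dots> \<le> Nr (tsub ?q2 (D h)) + Nr (tsub ?q3 (D k)) + Nr (tsub ?q1 (D ?s))"
      using tnorm_add[of "tsub ?q2 (D h)" r UNIV "tsub ?q3 (D k)"] qb Db by (auto intro: tsub_BT)
    also have "\<dots> \<le> L * Nd h * t / R h + L * (Nd h + Nd ?s) * t / R k + L * Nd ?s * t / R ?s"
      using a1 a2 a3 by linarith
    finally show ?thesis by (simp add: algebra_simps add_divide_distrib)
  qed
  then have "Nr ?E \<le> 0" by (intro ZERO[OF t0]) auto
  then have "Nr ?E = 0" using tnorm_nonneg[of r UNIV ?E] by linarith
  then show ?thesis by (rule tsub_eq0[OF Db(3) tadd_BT[OF Db(1,2)]])
qed

end

context ncx begin

lemma D_bound: "\<exists>C. \<forall>h\<in>BT d UNIV. Nr (D h) \<le> C * Nd h"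
proof -
  define M1 where "M1 = Nr (f (Ttri x x tz)) + L * \<rho>"
  have z0b: "Ttri x x tz \<in> BT d UNIV" by (rule Ttri_BT[OF xb xb tz_BT])
  have "Nr (D h) \<le> (4 * M1 / \<rho>) * Nd h" if h: "h \<in> BT d UNIV" for h
  proof (cases "Nd h = 0")
    case True
    then have "h = tz" by (rule tnorm_eq0[OF h])
    then show ?thesis by (simp add: D_tz)
  next
    case False
    then have hp: "Nd h > 0" using tnorm_nonneg[of d UNIV h] by linarith
    define c where "c = complex_of_real (\<rho> / (4 * Nd h))"
    have "0 \<le> \<rho> / (4 * Nd h)" using \<rho> hp by simp
    then have cn: "cmod c = \<rho> / (4 * Nd h)" unfolding c_def by (simp only: norm_of_real abs_of_nonneg)
    have c0: "c \<noteq> 0" using \<rho> hp by (simp add: c_def)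
    have wb: "tscale c h \<in> BT d UNIV" by (rule tscale_BT[OF h])
    have wn: "Nd (tscale c h) = \<rho> / 4" using tnorm_scale[OF h, of c] cn hp by simp
    have Dh: "D h = tscale (1/c) (G (tscale c h))" using CONS[OF h c0] wn \<rho> by simp
    let ?T = "Ttri x x (tscale c h)"
    have Tb: "?T \<in> BT d UNIV" by (rule Ttri_BT[OF xb xb wb])
    have TO: "?T \<in> \<Omega>" using TxO[OF wb] wn \<rho> by simp
    have dT: "Nd (tsub ?T (Ttri x x tz)) < \<rho>" using Tx_near[OF wb] wn \<rho> by linarith
    have fb: "f ?T \<in> BT r UNIV" "f (Ttri x x tz) \<in> BT r UNIV" using fBT TO z0O by auto
    have "Nr (tsub (f ?T) (f (Ttri x x tz))) \<le> L * Nd (tsub ?T (Ttri x x tz))"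
      by (rule lipz[OF Tb z0b dT]) (simp add: tsub_self \<rho>)
    also have "\<dots> \<le> L * \<rho>" using dT L0 by (simp add: mult_left_mono)
    finally have l1: "Nr (tsub (f ?T) (f (Ttri x x tz))) \<le> L * \<rho>" .
    have "f ?T = tadd (tsub (f ?T) (f (Ttri x x tz))) (f (Ttri x x tz))" by (simp add: tadd_def tsub_def)
    then have "Nr (f ?T) \<le> Nr (tsub (f ?T) (f (Ttri x x tz))) + Nr (f (Ttri x x tz))"
      using tnorm_add[OF tsub_BT[OF fb] fb(2)] by simp
    then have fT: "Nr (f ?T) \<le> M1" using l1 by (simp add: M1_def)
    have Gn: "Nr (G (tscale c h)) \<le> M1" unfolding G_def using B12_norm[OF fb(1)] fT by linarith
    have Gb: "G (tscale c h) \<in> BT r UNIV" using G_BT[OF wb] wn \<rho> by simp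
    have "Nr (D h) = cmod (1/c) * Nr (G (tscale c h))" unfolding Dh by (rule tnorm_scale[OF Gb])
    also have "\<dots> \<le> cmod (1/c) * M1" using Gn by (simp add: mult_left_mono)
    also have "cmod (1/c) = 4 * Nd h / \<rho>" using cn \<rho> hp by (simp add: norm_divide)
    also have "4 * Nd h / \<rho> * M1 = (4 * M1 / \<rho>) * Nd h" by simp
    finally show ?thesis .
  qed
  then show ?thesis by blast
qed

lemma FRE: "\<forall>\<epsilon>>0. \<exists>\<delta>>0. \<forall>h\<in>BT d UNIV. Nd h < \<delta> \<and> tadd x h \<in> \<Omega> \<longrightarrow>
               Nr (tsub (tsub (f (tadd x h)) (f x)) (D h)) \<le> \<epsilon> * Nd h"
proof (intro allI impI)
  fix \<epsilon> :: real assume \<epsilon>: "\<epsilon> > 0"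
  define \<delta> where "\<delta> = min (\<rho> / 3) (\<epsilon> * \<rho> / (4 * (L + 1)))"
  have \<delta>: "\<delta> > 0" using \<epsilon> \<rho> L0 by (simp add: \<delta>_def)
  have "Nr (tsub (tsub (f (tadd x h)) (f x)) (D h)) \<le> \<epsilon> * Nd h"
    if h: "h \<in> BT d UNIV" and hd: "Nd h < \<delta>" and yO: "tadd x h \<in> \<Omega>" for h
  proof (cases "Nd h = 0")
    case True
    then have "h = tz" by (rule tnorm_eq0[OF h])
    then show ?thesis by (simp add: D_tz tsub_self)
  next
    case False
    then have hp: "Nd h > 0" using tnorm_nonneg[of d UNIV h] by linarith
    let ?y = "tadd x h"
    define c where "c = complex_of_real (\<rho> / (4 * Nd h))"
    have "0 \<le> \<rho> / (4 * Nd h)" using \<rho> hp by simp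
    then have cn: "cmod c = \<rho> / (4 * Nd h)" unfolding c_def by (simp only: norm_of_real abs_of_nonneg)
    have c0: "c \<noteq> 0" using \<rho> hp by (simp add: c_def)
    have wb: "tscale c h \<in> BT d UNIV" by (rule tscale_BT[OF h])
    have wn: "Nd (tscale c h) = \<rho> / 4" using tnorm_scale[OF h, of c] cn hp by simp
    have Dh: "D h = tscale (1/c) (G (tscale c h))" using CONS[OF h c0] wn \<rho> by simp
    have e1: "tscale (-c) (tsub x ?y) = tscale c h" by (auto simp: tscale_def tsub_def tadd_def fun_eq_iff)
    have e2: "tsub ?y x = h" by (auto simp: tsub_def tadd_def fun_eq_iff)
    have S: "Nr (tsub (tscale (-c) (tsub (f x) (f ?y))) (G (tscale c h))) \<le> L * (0 + Nd h)"
      using STAR[OF xO yO, of "-c"] e1 e2 tsub_self[of x] hd \<rho> wn by (simp add: \<delta>_def)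
    have fb: "f x \<in> BT r UNIV" "f ?y \<in> BT r UNIV" using fBT xO yO by auto
    have Gb: "G (tscale c h) \<in> BT r UNIV" using G_BT[OF wb] wn \<rho> by simp
    have e3: "tsub (tsub (f ?y) (f x)) (D h) = tscale (1/c) (tsub (tscale (-c) (tsub (f x) (f ?y))) (G (tscale c h)))"
      unfolding Dh using c0 by (auto simp: tscale_def tsub_def fun_eq_iff field_simps)
    have "Nr (tsub (tsub (f ?y) (f x)) (D h)) = cmod (1/c) * Nr (tsub (tscale (-c) (tsub (f x) (f ?y))) (G (tscale c h)))"
      unfolding e3 by (rule tnorm_scale[OF tsub_BT[OF tscale_BT[OF tsub_BT[OF fb]] Gb]])
    also have "\<dots> \<le> cmod (1/c) * (L * Nd h)" using S by (simp add: mult_left_mono)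
    also have "cmod (1/c) = 4 * Nd h / \<rho>" using cn \<rho> hp by (simp add: norm_divide)
    also have "4 * Nd h / \<rho> * (L * Nd h) = (4 * L * Nd h / \<rho>) * Nd h" by simp
    also have "\<dots> \<le> \<epsilon> * Nd h"
    proof (rule mult_right_mono)
      have "Nd h < \<epsilon> * \<rho> / (4 * (L + 1))" using hd by (simp add: \<delta>_def)
      then have "4 * L * Nd h \<le> 4 * L * (\<epsilon> * \<rho> / (4 * (L + 1)))" using L0
        by (intro mult_left_mono) auto
      also have "\<dots> = \<epsilon> * \<rho> * (L / (L + 1))" using L0 by (simp add: field_simps)
      also have "\<dots> \<le> \<epsilon> * \<rho> * 1" using L0 \<epsilon> \<rho> by (intro mult_left_mono) auto
      finally show "4 * L * Nd h / \<rho> \<le> \<epsilon>" using \<rho> by (simp add: divide_le_eq)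
    qed (use hp in simp)
    finally show ?thesis .
  qed
  then show "\<exists>\<delta>>0. \<forall>h\<in>BT d UNIV. Nd h < \<delta> \<and> tadd x h \<in> \<Omega> \<longrightarrow>
               Nr (tsub (tsub (f (tadd x h)) (f x)) (D h)) \<le> \<epsilon> * Nd h" using \<delta> by blast
qed

lemma PART3: "\<exists>D :: H tup \<Rightarrow> H tup.
            (\<forall>h\<in>BT d UNIV. D h \<in> BT r UNIV)
          \<and> (\<forall>h\<in>BT d UNIV. \<forall>k\<in>BT d UNIV. \<forall>a b.
               D (tadd (tscale a h) (tscale b k)) = tadd (tscale a (D h)) (tscale b (D k)))
          \<and> (\<exists>C. \<forall>h\<in>BT d UNIV. tnorm r UNIV (D h) \<le> C * tnorm d UNIV h)
          \<and> (\<forall>\<epsilon>>0. \<exists>\<delta>>0. \<forall>h\<in>BT d UNIV. tnorm d UNIV h < \<delta> \<and> tadd x h \<in> \<Omega> \<longrightarrow>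
               tnorm r UNIV (tsub (tsub (f (tadd x h)) (f x)) (D h)) \<le> \<epsilon> * tnorm d UNIV h)"
proof (intro exI[of _ D] conjI ballI allI)
  show "D h \<in> BT r UNIV" if "h \<in> BT d UNIV" for h using D_BT that .
  show "D (tadd (tscale a h) (tscale b k)) = tadd (tscale a (D h)) (tscale b (D k))"
    if "h \<in> BT d UNIV" "k \<in> BT d UNIV" for h k a b
    using D_add[OF tscale_BT[OF that(1)] tscale_BT[OF that(2)]] D_hom[OF that(1)] D_hom[OF that(2)] by simp
qed (use D_bound FRE in auto)

lemma PART2: "\<forall>h\<in>BT d UNIV. \<exists>L\<in>BT r UNIV. \<forall>\<epsilon>>0. \<exists>\<delta>>0. \<forall>t::complex.
            t \<noteq> 0 \<and> cmod t < \<delta> \<and> tadd x (tscale t h) \<in> \<Omega> \<longrightarrow>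
            tnorm r UNIV (tsub (tscale (1 / t) (tsub (f (tadd x (tscale t h))) (f x))) L) < \<epsilon>"
  using GAT D_BT by blast

end

context ncl begin

lemma mk_ncx: assumes x: "x \<in> \<Omega>" shows "\<exists>\<rho> L ex. ncx d r \<Omega> f \<Omega>s x \<rho> L ex"
proof -
  obtain k where k: "x \<in> \<Omega>s k" using \<Omega>_ex[OF x] by blast
  obtain \<rho> L where rl: "\<rho> > 0" "L \<ge> 0"
    "\<forall>y\<in>BT d UNIV. Nd (tsub y (Ttri x x tz)) < \<rho> \<longrightarrow> y \<in> \<Omega>"
    "\<forall>y\<in>BT d UNIV. \<forall>y'\<in>BT d UNIV. Nd (tsub y (Ttri x x tz)) < \<rho> \<longrightarrow> Nd (tsub y' (Ttri x x tz)) < \<rho> \<longrightarrow>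
        Nr (tsub (f y) (f y')) \<le> L * Nd (tsub y y')"
    using LIP[OF DIAG[OF k]] by blast
  obtain ex where ex: "ex > 0" "\<forall>y\<in>BT d UNIV. Nd (tsub y x) < ex \<longrightarrow> y \<in> \<Omega>s (Suc k)"
    using int[OF k] by blast
  have "ncx d r \<Omega> f \<Omega>s x \<rho> L ex"
    by unfold_locales (use x rl ex \<Omega>s_\<Omega> in auto)
  then show ?thesis by blast
qed

lemma PART1: "\<forall>x\<in>\<Omega>. \<forall>\<epsilon>>0. \<exists>\<delta>>0. \<forall>y\<in>\<Omega>.
            tnorm d UNIV (tsub y x) < \<delta> \<longrightarrow> tnorm r UNIV (tsub (f y) (f x)) < \<epsilon>"
proof (intro ballI allI impI)
  fix x \<epsilon> assume x: "x \<in> \<Omega>" and \<epsilon>: "(\<epsilon>::real) > 0"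
  obtain k where k: "x \<in> \<Omega>s k" using \<Omega>_ex[OF x] by blast
  obtain \<rho> L where rl: "\<rho> > 0" "L \<ge> 0"
    "\<forall>y\<in>BT d UNIV. \<forall>y'\<in>BT d UNIV. Nd (tsub y x) < \<rho> \<longrightarrow> Nd (tsub y' x) < \<rho> \<longrightarrow>
        Nr (tsub (f y) (f y')) \<le> L * Nd (tsub y y')"
    using LIP[OF k] by blast
  define \<delta> where "\<delta> = min \<rho> (\<epsilon> / (L + 1))"
  have \<delta>: "\<delta> > 0" using rl \<epsilon> by (simp add: \<delta>_def)
  have "Nr (tsub (f y) (f x)) < \<epsilon>" if y: "y \<in> \<Omega>" and dy: "Nd (tsub y x) < \<delta>" for y
  proof -
    have xb: "x \<in> BT d UNIV" and yb: "y \<in> BT d UNIV" using \<Omega>_BT x y by auto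
    have "Nr (tsub (f y) (f x)) \<le> L * Nd (tsub y x)"
      using rl(3) yb xb dy rl(1) by (simp add: tsub_self \<delta>_def)
    also have "\<dots> \<le> L * (\<epsilon> / (L + 1))" using dy rl(2) by (intro mult_left_mono) (auto simp: \<delta>_def)
    also have "\<dots> < \<epsilon>" using rl(2) \<epsilon> by (simp add: field_simps)
    finally show ?thesis .
  qed
  then show "\<exists>\<delta>>0. \<forall>y\<in>\<Omega>. Nd (tsub y x) < \<delta> \<longrightarrow> Nr (tsub (f y) (f x)) < \<epsilon>" using \<delta> by blast
qed

end

theorem lemma3p2:
  fixes d r :: nat and \<Omega> :: "H tup set" and f :: "H tup \<Rightarrow> H tup"
  assumes "nc_domain d \<Omega>" and "nc_function d r \<Omega> f"
  shows "(\<forall>x\<in>\<Omega>. \<forall>\<epsilon>>0. \<exists>\<delta>>0. \<forall>y\<in>\<Omega>.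
            tnorm d UNIV (tsub y x) < \<delta> \<longrightarrow> tnorm r UNIV (tsub (f y) (f x)) < \<epsilon>)
       \<and> (\<forall>x\<in>\<Omega>. \<forall>h\<in>BT d UNIV. \<exists>L\<in>BT r UNIV. \<forall>\<epsilon>>0. \<exists>\<delta>>0. \<forall>t::complex.
            t \<noteq> 0 \<and> cmod t < \<delta> \<and> tadd x (tscale t h) \<in> \<Omega> \<longrightarrow>
            tnorm r UNIV (tsub (tscale (1 / t) (tsub (f (tadd x (tscale t h))) (f x))) L) < \<epsilon>)
       \<and> (\<forall>x\<in>\<Omega>. \<exists>D :: H tup \<Rightarrow> H tup.
            (\<forall>h\<in>BT d UNIV. D h \<in> BT r UNIV)
          \<and> (\<forall>h\<in>BT d UNIV. \<forall>k\<in>BT d UNIV. \<forall>a b.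
               D (tadd (tscale a h) (tscale b k)) = tadd (tscale a (D h)) (tscale b (D k)))
          \<and> (\<exists>C. \<forall>h\<in>BT d UNIV. tnorm r UNIV (D h) \<le> C * tnorm d UNIV h)
          \<and> (\<forall>\<epsilon>>0. \<exists>\<delta>>0. \<forall>h\<in>BT d UNIV. tnorm d UNIV h < \<delta> \<and> tadd x h \<in> \<Omega> \<longrightarrow>
               tnorm r UNIV (tsub (tsub (f (tadd x h)) (f x)) (D h)) \<le> \<epsilon> * tnorm d UNIV h))"
proof -
  obtain \<Omega>s where N: "ncl d r \<Omega> f \<Omega>s" using ncl_intro[OF assms] by blast
  interpret ncl d r \<Omega> f \<Omega>s by (rule N)
  have p2: "\<forall>h\<in>BT d UNIV. \<exists>L\<in>BT r UNIV. \<forall>\<epsilon>>0. \<exists>\<delta>>0. \<forall>t::complex.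
            t \<noteq> 0 \<and> cmod t < \<delta> \<and> tadd x (tscale t h) \<in> \<Omega> \<longrightarrow>
            tnorm r UNIV (tsub (tscale (1 / t) (tsub (f (tadd x (tscale t h))) (f x))) L) < \<epsilon>"
    if x: "x \<in> \<Omega>" for x
  proof -
    obtain \<rho> L ex where "ncx d r \<Omega> f \<Omega>s x \<rho> L ex" using mk_ncx[OF x] by blast
    then interpret X: ncx d r \<Omega> f \<Omega>s x \<rho> L ex .
    show ?thesis by (rule X.PART2)
  qed
  have p3: "\<exists>D :: H tup \<Rightarrow> H tup.
            (\<forall>h\<in>BT d UNIV. D h \<in> BT r UNIV)
          \<and> (\<forall>h\<in>BT d UNIV. \<forall>k\<in>BT d UNIV. \<forall>a b.
               D (tadd (tscale a h) (tscale b k)) = tadd (tscale a (D h)) (tscale b (D k)))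
          \<and> (\<exists>C. \<forall>h\<in>BT d UNIV. tnorm r UNIV (D h) \<le> C * tnorm d UNIV h)
          \<and> (\<forall>\<epsilon>>0. \<exists>\<delta>>0. \<forall>h\<in>BT d UNIV. tnorm d UNIV h < \<delta> \<and> tadd x h \<in> \<Omega> \<longrightarrow>
               tnorm r UNIV (tsub (tsub (f (tadd x h)) (f x)) (D h)) \<le> \<epsilon> * tnorm d UNIV h)"
    if x: "x \<in> \<Omega>" for x
  proof -
    obtain \<rho> L ex where "ncx d r \<Omega> f \<Omega>s x \<rho> L ex" using mk_ncx[OF x] by blast
    then interpret X: ncx d r \<Omega> f \<Omega>s x \<rho> L ex .
    show ?thesis by (rule X.PART3)
  qed
  show ?thesis using PART1 p2 p3 by blast
qed

end
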